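(* Fix integers $2\le r\le k$, let $u(n)$ satisfy $u(n)\to\infty$, $u(n)/n\to0$, and let $m=\lfloor\mu n^{r-1}/u(n)^{r-2}\rfloor$ for a constant $\mu>0$. Then for any constants $\tau>0$ and $\lambda\in\mathbb R$, $$\mathbb E\bigl[\exp\{\lambda\,\underline{E}(\lfloor\tau u(n)\rfloor)\}\bigr]=\exp\Bigl\{\varphi_{k,r}(\mu,\lambda,\tau)\,u(n)+O\bigl(\max\{1,u(n)^2/n\}\bigr)\Bigr\}.$$
   Context: Let $N(t):=n-u(n)-t$ and $p_j(n):=\binom{n-u(n)}{j}\binom{u(n)}{k-j}/\binom{n}{k}$ for $j=0,\dots,k$. Let $(C_0,\dots,C_k)$ have the multinomial distribution with $m$ trials and cell probabilities $p_0(n),\dots,p_k(n)$. The Markov chain $(\underline{E}(t),\underline{C}_{k-r+2}(t),\dots,\underline{C}_k(t))_{t\ge0}$ starts at $\underline{E}(0)=\sum_{j=1}^{k-r+1}jC_j$, $\underline{C}_j(0)=C_j$ for $k-r+2\le j\le k$, and evolves by $\underline{C}_k(t+1)=\underline{C}_k(t)-\underline{R}_k(t)$; $\underline{C}_j(t+1)=\underline{C}_j(t)-\underline{R}_j(t)+\underline{R}_{j+1}(t)$ for $k-r+2\le j\le k-1$; $\underline{E}(t+1)=\underline{E}(t)-1-\underline{R}'(t)+(k-r+1)\underline{R}_{k-r+2}(t)$, where, conditionally on the state at time $t$, the variables are independent with $\underline{R}_j(t)\sim\mathrm{Binom}(\underline{C}_j(t),\,j/N(t))$ for $k-r+2\le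 j\le k$ and $\underline{R}'(t)\sim\mathrm{Binom}(\underline{E}(t)+t,\,1/(N(t)-k+r))$. $\varphi_{k,r}(\mu,\lambda,\tau):=\mu\bigl(e^{(k-r+1)\lambda}-1\bigr)\binom{k}{r-1}(1+\tau)^{r-1}-\lambda\tau$. *)

theory Defs
  imports "HOL-Probability.Probability" "HOL-Library.Landau_Symbols"
begin

(* Binomial distribution; the success probability is clamped to [0,1]
   (only relevant for small n, where the chain's parameters may leave [0,1]). *)
definition binom :: "nat \<Rightarrow> real \<Rightarrow> nat pmf" where
  "binom N p = binomial_pmf N (min 1 (max 0 p))"

definition categorical :: "nat \<Rightarrow> (nat \<Rightarrow> real) \<Rightarrow> nat pmf" where
  "categorical k p = embed_pmf (\<lambda>j. if j \<le> k then p j else 0)"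

fun multinomial :: "nat \<Rightarrow> (nat \<Rightarrow> real) \<Rightarrow> nat \<Rightarrow> (nat \<Rightarrow> nat) pmf" where
  "multinomial k p 0 = return_pmf (\<lambda>_. 0)"
| "multinomial k p (Suc m) =
     bind_pmf (multinomial k p m) (\<lambda>C. bind_pmf (categorical k p) (\<lambda>j. return_pmf (C(j := C j + 1))))"

definition pj :: "nat \<Rightarrow> (nat \<Rightarrow> nat) \<Rightarrow> nat \<Rightarrow> nat \<Rightarrow> real" where
  "pj k u n j = real ((n - u n) choose j) * real (u n choose (k - j)) / real (n choose k)"

definition NN :: "(nat \<Rightarrow> nat) \<Rightarrow> nat \<Rightarrow> nat \<Rightarrow> real" where
  "NN u n t = real n - real (u n) - real t"

fun rbinoms :: "(nat \<Rightarrow> nat) \<Rightarrow> nat \<Rightarrow> nat \<Rightarrow> (nat \<Rightarrow> nat) \<Rightarrow> nat list \<Rightarrow> (nat \<Rightarrow> nat) pmf" where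
  "rbinoms u n t c [] = return_pmf (\<lambda>_. 0)"
| "rbinoms u n t c (j # js) =
     bind_pmf (rbinoms u n t c js)
       (\<lambda>R. bind_pmf (binom (c j) (real j / NN u n t)) (\<lambda>x. return_pmf (R(j := x))))"

(* one step of the chain from time t to t+1; state (E, C) with C j meaningful for k-r+2 \<le> j \<le> k *)
definition chain_step :: "nat \<Rightarrow> nat \<Rightarrow> (nat \<Rightarrow> nat) \<Rightarrow> nat \<Rightarrow> nat \<Rightarrow> int \<times> (nat \<Rightarrow> nat) \<Rightarrow> (int \<times> (nat \<Rightarrow> nat)) pmf" where
  "chain_step k r u n t s =
     (case s of (e, c) \<Rightarrow>
       bind_pmf (rbinoms u n t c [k - r + 2 ..< k + 1]) (\<lambda>R.
       bind_pmf (binom (nat (e + int t)) (1 / (NN u n t - real k + real r))) (\<lambda>R'.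
         return_pmf
           (e - 1 - int R' + int (k - r + 1) * int (R (k - r + 2)),
            \<lambda>j. if k - r + 2 \<le> j \<and> j \<le> k then c j - R j + R (j + 1) else 0))))"

definition chain_init :: "nat \<Rightarrow> nat \<Rightarrow> (nat \<Rightarrow> nat) \<Rightarrow> nat \<Rightarrow> nat \<Rightarrow> (int \<times> (nat \<Rightarrow> nat)) pmf" where
  "chain_init k r u n m =
     map_pmf (\<lambda>C. (int (\<Sum>j = 1..k - r + 1. j * C j),
                   \<lambda>j. if k - r + 2 \<le> j \<and> j \<le> k then C j else 0))
             (multinomial k (pj k u n) m)"

fun chain :: "nat \<Rightarrow> nat \<Rightarrow> (nat \<Rightarrow> nat) \<Rightarrow> nat \<Rightarrow> nat \<Rightarrow> nat \<Rightarrow> (int \<times> (nat \<Rightarrow> nat)) pmf" where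
  "chain k r u n m 0 = chain_init k r u n m"
| "chain k r u n m (Suc t) = bind_pmf (chain k r u n m t) (chain_step k r u n t)"

definition phi :: "nat \<Rightarrow> nat \<Rightarrow> real \<Rightarrow> real \<Rightarrow> real \<Rightarrow> real" where
  "phi k r \<mu> lam \<tau> = \<mu> * (exp (real (k - r + 1) * lam) - 1) * real (k choose (r - 1)) * (1 + \<tau>) ^ (r - 1) - lam * \<tau>"

end

theory Submission
  imports Defs
begin


definition clamp :: "real \<Rightarrow> real" where "clamp p = min 1 (max 0 p)"

lemma clamp_01: "0 \<le> clamp p" "clamp p \<le> 1" by (auto simp: clamp_def)

lemma exp_bind:
  fixes h :: "'b \<Rightarrow> real"
  assumes "finite (set_pmf p)" "\<And>x. x \<in> set_pmf p \<Longrightarrow> finite (set_pmf (f x))"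
  shows "measure_pmf.expectation (p \<bind> f) h = measure_pmf.expectation p (\<lambda>a. measure_pmf.expectation (f a) h)"
proof -
  have "measure_pmf.expectation (p \<bind> f) h = (\<Sum>a\<in>set_pmf p. pmf p a *\<^sub>R measure_pmf.expectation (f a) h)"
    using assms by (intro pmf_expectation_bind) auto
  also have "\<dots> = measure_pmf.expectation p (\<lambda>a. measure_pmf.expectation (f a) h)"
    using assms by (subst integral_measure_pmf[of "set_pmf p"]) auto
  finally show ?thesis .
qed

lemma binom_finite: "finite (set_pmf (binom N s))"
  unfolding binom_def by (rule finite_set_pmf_binomial_pmf) auto

lemma binom_set: "x \<in> set_pmf (binom N s) \<Longrightarrow> x \<le> N"
  unfolding binom_def by (subst (asm) set_pmf_binomial_eq) (auto split: if_splits)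

lemma binom_mgf:
  "measure_pmf.expectation (binom N s) (\<lambda>x. exp (w * real x)) = (1 - clamp s + clamp s * exp w) ^ N"
proof -
  have p: "clamp s \<in> {0..1}" using clamp_01 by auto
  have "measure_pmf.expectation (binom N s) (\<lambda>x. exp (w * real x))
     = (\<Sum>k\<le>N. real (N choose k) * (clamp s * exp w) ^ k * (1 - clamp s) ^ (N - k))"
    unfolding binom_def clamp_def[symmetric]
    by (subst expectation_binomial_pmf'[OF p]) (simp add: exp_of_nat_mult[symmetric] power_mult_distrib mult.commute mult.left_commute)
  also have "\<dots> = (clamp s * exp w + (1 - clamp s)) ^ N"
    by (simp add: binomial_ring)
  finally show ?thesis by (simp add: algebra_simps)
qed

lemma rbinoms_props:
  assumes "distinct js"
  shows "finite (set_pmf (rbinoms u n t c js)) \<and>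
    (\<forall>R\<in>set_pmf (rbinoms u n t c js). (\<forall>j. j \<notin> set js \<longrightarrow> R j = 0) \<and> (\<forall>j\<in>set js. R j \<le> c j)) \<and>
    measure_pmf.expectation (rbinoms u n t c js) (\<lambda>R. exp (\<Sum>j\<in>set js. w j * real (R j)))
      = (\<Prod>j\<in>set js. (1 - clamp (real j / NN u n t) + clamp (real j / NN u n t) * exp (w j)) ^ c j)"
  using assms
proof (induction js)
  case Nil
  then show ?case by simp
next
  case (Cons j js)
  from Cons have IH: "finite (set_pmf (rbinoms u n t c js))"
    "\<And>R. R\<in>set_pmf (rbinoms u n t c js) \<Longrightarrow> (\<forall>j. j \<notin> set js \<longrightarrow> R j = 0) \<and> (\<forall>j\<in>set js. R j \<le> c j)"
    "measure_pmf.expectation (rbinoms u n t c js) (\<lambda>R. exp (\<Sum>j\<in>set js. w j * real (R j)))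
      = (\<Prod>j\<in>set js. (1 - clamp (real j / NN u n t) + clamp (real j / NN u n t) * exp (w j)) ^ c j)"
    by auto
  have jn: "j \<notin> set js" using Cons by simp
  have fin: "finite (set_pmf (rbinoms u n t c (j # js)))"
    using IH(1) binom_finite by simp
  have set: "\<forall>R\<in>set_pmf (rbinoms u n t c (j#js)). (\<forall>i. i \<notin> set (j#js) \<longrightarrow> R i = 0) \<and> (\<forall>i\<in>set (j#js). R i \<le> c i)"
    using IH(2) binom_set by auto
  have sumeq: "(\<Sum>i\<in>set (j#js). w i * real ((R(j:=x)) i)) = w j * real x + (\<Sum>i\<in>set js. w i * real (R i))" for R x
  proof -
    have "(\<Sum>i\<in>set js. w i * real ((R(j:=x)) i)) = (\<Sum>i\<in>set js. w i * real (R i))"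
      using jn by (intro sum.cong) auto
    then show ?thesis using jn by simp
  qed
  have "measure_pmf.expectation (rbinoms u n t c (j # js)) (\<lambda>R. exp (\<Sum>i\<in>set (j#js). w i * real (R i)))
     = measure_pmf.expectation (rbinoms u n t c js) (\<lambda>R. measure_pmf.expectation (binom (c j) (real j / NN u n t))
          (\<lambda>x. exp (w j * real x) * exp (\<Sum>i\<in>set js. w i * real (R i))))"
  proof -
    have inner: "measure_pmf.expectation (binom (c j) (real j / NN u n t) \<bind> (\<lambda>x. return_pmf (R(j := x)))) h
       = measure_pmf.expectation (binom (c j) (real j / NN u n t)) (\<lambda>x. h (R(j:=x)))" for R and h :: "_ \<Rightarrow> real"
      by (subst exp_bind) (auto simp: binom_finite)
    have "measure_pmf.expectation (rbinoms u n t c (j # js)) (\<lambda>R. exp (\<Sum>i\<in>set (j#js). w i * real (R i)))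
      = measure_pmf.expectation (rbinoms u n t c js) (\<lambda>R. measure_pmf.expectation (binom (c j) (real j / NN u n t))
          (\<lambda>x. exp (\<Sum>i\<in>set (j#js). w i * real ((R(j:=x)) i))))"
      unfolding rbinoms.simps
      by (subst exp_bind) (auto simp: IH(1) binom_finite inner)
    then show ?thesis by (simp only: sumeq exp_add)
  qed
  also have "\<dots> = measure_pmf.expectation (rbinoms u n t c js) (\<lambda>R.
       (1 - clamp (real j / NN u n t) + clamp (real j / NN u n t) * exp (w j)) ^ c j * exp (\<Sum>i\<in>set js. w i * real (R i)))"
    by (simp add: binom_mgf)
  also have "\<dots> = (1 - clamp (real j / NN u n t) + clamp (real j / NN u n t) * exp (w j)) ^ c j *
      measure_pmf.expectation (rbinoms u n t c js) (\<lambda>R. exp (\<Sum>i\<in>set js. w i * real (R i)))"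
    by simp
  also have "\<dots> = (\<Prod>i\<in>set (j#js). (1 - clamp (real i / NN u n t) + clamp (real i / NN u n t) * exp (w i)) ^ c i)"
    using IH(3) jn by simp
  finally show ?case using fin set by blast
qed

definition FF :: "nat \<Rightarrow> nat \<Rightarrow> real \<Rightarrow> (nat \<Rightarrow> real) \<Rightarrow> int \<times> (nat \<Rightarrow> nat) \<Rightarrow> real" where
  "FF k r b a s = exp (b * real_of_int (fst s) + (\<Sum>j\<in>{k-r+2..k}. a j * real (snd s j)))"
definition qq :: "nat \<Rightarrow> nat \<Rightarrow> (nat \<Rightarrow> nat) \<Rightarrow> nat \<Rightarrow> nat \<Rightarrow> real" where
  "qq k r u n t = 1 / (NN u n t - real k + real r)"
definition beta :: "real \<Rightarrow> real \<Rightarrow> real" where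
  "beta q b = 1 - clamp q + clamp q * exp (-b)"
definition gam :: "real \<Rightarrow> real \<Rightarrow> real" where
  "gam s d = 1 - clamp s + clamp s * exp d"
definition dl :: "nat \<Rightarrow> nat \<Rightarrow> real \<Rightarrow> (nat \<Rightarrow> real) \<Rightarrow> nat \<Rightarrow> real" where
  "dl k r b a j = (if j = k-r+2 then real (k-r+1) * b else a (j-1)) - a j"
definition stepb :: "nat \<Rightarrow> nat \<Rightarrow> (nat \<Rightarrow> nat) \<Rightarrow> nat \<Rightarrow> nat \<Rightarrow> real \<Rightarrow> real" where
  "stepb k r u n t b = b + ln (beta (qq k r u n t) b)"
definition stepa :: "nat \<Rightarrow> nat \<Rightarrow> (nat \<Rightarrow> nat) \<Rightarrow> nat \<Rightarrow> nat \<Rightarrow> real \<Rightarrow> (nat \<Rightarrow> real) \<Rightarrow> nat \<Rightarrow> real" where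
  "stepa k r u n t b a = (\<lambda>j. a j + ln (gam (real j / NN u n t) (dl k r b a j)))"
definition KK :: "nat \<Rightarrow> nat \<Rightarrow> (nat \<Rightarrow> nat) \<Rightarrow> nat \<Rightarrow> nat \<Rightarrow> real \<Rightarrow> real" where
  "KK k r u n t b = exp (-b + real t * ln (beta (qq k r u n t) b))"

lemma pos_mix: fixes p x :: real shows "0 \<le> p \<Longrightarrow> p \<le> 1 \<Longrightarrow> 0 < 1 - p + p * exp x"
proof (cases "p = 1")
  case False
  assume "0 \<le> p" "p \<le> 1"
  then have "0 < 1 - p" using False by simp
  moreover have "0 \<le> p * exp x" using \<open>0 \<le> p\<close> by simp
  ultimately show ?thesis by linarith
qed simp

lemma beta_pos: "0 < beta q b" unfolding beta_def using pos_mix clamp_01 by blast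
lemma gam_pos: "0 < gam s d" unfolding gam_def using pos_mix clamp_01 by blast

lemma shift_sum:
  fixes a :: "nat \<Rightarrow> real" and R :: "nat \<Rightarrow> nat"
  assumes "lo \<le> hi" "R (Suc hi) = 0"
  shows "(\<Sum>j=lo..hi. a j * real (R (Suc j))) = (\<Sum>j=Suc lo..hi. a (j-1) * real (R j))"
proof -
  have "(\<Sum>j=Suc lo..Suc hi. a (j-1) * real (R j)) = (\<Sum>j=lo..hi. a j * real (R (Suc j)))"
    by (subst sum.shift_bounds_cl_Suc_ivl) simp
  moreover have "(\<Sum>j=Suc lo..Suc hi. a (j-1) * real (R j)) = (\<Sum>j=Suc lo..hi. a (j-1) * real (R j))"
    using assms by (subst sum.cl_ivl_Suc) auto
  ultimately show ?thesis by simp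
qed

lemma exponent_identity:
  fixes a :: "nat \<Rightarrow> real" and R c :: "nat \<Rightarrow> nat"
  assumes "2 \<le> r" "r \<le> k" "R (Suc k) = 0" "\<And>j. j \<in> {k-r+2..k} \<Longrightarrow> R j \<le> c j"
  shows "b * (e - 1 - real R' + real (k-r+1) * real (R (k-r+2)))
      + (\<Sum>j\<in>{k-r+2..k}. a j * real (c j - R j + R (j + 1)))
    = b * e - b + (\<Sum>j\<in>{k-r+2..k}. a j * real (c j)) + (- b) * real R'
      + (\<Sum>j\<in>{k-r+2..k}. dl k r b a j * real (R j))"
proof -
  define lo where "lo = k - r + 2"
  have lohi: "lo \<le> k" using assms unfolding lo_def by simp
  have L: "k - r + 1 = lo - 1" "Suc (lo - 1) = lo" using assms unfolding lo_def by auto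
  have s1: "(\<Sum>j\<in>{lo..k}. a j * real (c j - R j + R (j + 1)))
      = (\<Sum>j\<in>{lo..k}. a j * real (c j)) - (\<Sum>j\<in>{lo..k}. a j * real (R j)) + (\<Sum>j\<in>{lo..k}. a j * real (R (Suc j)))"
  proof -
    have "\<And>j. j\<in>{lo..k} \<Longrightarrow> a j * real (c j - R j + R (j+1)) = a j * real (c j) - a j*real(R j) + a j * real(R(Suc j))"
    proof -
      fix j assume "j\<in>{lo..k}"
      then have h: "R j \<le> c j" using assms(4) unfolding lo_def[symmetric] by auto
      have "real (c j - R j + R (j+1)) = real (c j - R j) + real (R(j+1))" by (simp only: of_nat_add)
      moreover have "real (c j - R j) = real(c j) - real (R j)" by (rule of_nat_diff[OF h])
      ultimately show "a j * real (c j - R j + R (j+1)) = a j * real (c j) - a j*real(R j) + a j * real(R(Suc j))"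
        by (simp add: algebra_simps)
    qed
    then have "(\<Sum>j\<in>{lo..k}. a j * real (c j - R j + R (j + 1))) = (\<Sum>j\<in>{lo..k}. a j * real (c j) - a j*real(R j) + a j * real(R(Suc j)))"
      by (rule sum.cong[OF refl])
    then show ?thesis by (simp add: sum.distrib sum_subtractf)
  qed
  have s2: "(\<Sum>j\<in>{lo..k}. a j * real (R (Suc j))) = (\<Sum>j=Suc lo..k. a (j-1) * real (R j))"
    using shift_sum[of lo k R a, OF lohi assms(3)] by simp
  have s3: "(\<Sum>j\<in>{lo..k}. dl k r b a j * real (R j))
     = real (k-r+1) * b * real (R lo) + (\<Sum>j=Suc lo..k. a (j-1) * real (R j)) - (\<Sum>j\<in>{lo..k}. a j * real (R j))"
  proof -
    have "(\<Sum>j\<in>{lo..k}. dl k r b a j * real (R j)) = (\<Sum>j\<in>{lo..k}. (if j = lo then real (k-r+1) * b else a (j-1)) * real (R j))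
        - (\<Sum>j\<in>{lo..k}. a j * real (R j))"
      unfolding dl_def lo_def[symmetric] by (simp add: sum_subtractf[symmetric] algebra_simps)
    moreover have "(\<Sum>j\<in>{lo..k}. (if j = lo then real (k-r+1) * b else a (j-1)) * real (R j))
       = real (k-r+1) * b * real (R lo) + (\<Sum>j=Suc lo..k. a (j-1) * real (R j))"
      using lohi by (subst sum.atLeast_Suc_atMost) (auto intro!: sum.cong)
    ultimately show ?thesis by simp
  qed
  show ?thesis unfolding lo_def[symmetric] using s1 s2 s3 by (simp add: algebra_simps)
qed

lemma set_js: "set [k - r + 2 ..< k + 1] = {k-r+2..k}" by auto

lemma step_mgf:
  assumes r: "2 \<le> r" "r \<le> k" and st: "fst s + int t \<ge> 0"
  shows "finite (set_pmf (chain_step k r u n t s))"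
    "\<forall>s'\<in>set_pmf (chain_step k r u n t s). fst s' + int (Suc t) \<ge> 0"
    "measure_pmf.expectation (chain_step k r u n t s) (FF k r b a)
       = KK k r u n t b * FF k r (stepb k r u n t b) (stepa k r u n t b a) s"
proof -
  obtain e c where s: "s = (e, c)" by (cases s)
  define js where "js = [k - r + 2 ..< k + 1]"
  have dj: "distinct js" unfolding js_def by simp
  have sj: "set js = {k-r+2..k}" unfolding js_def by auto
  note RP = rbinoms_props[OF dj, of u n t c]
  define q where "q = qq k r u n t"
  have qdef: "1 / (NN u n t - real k + real r) = q" unfolding q_def qq_def by simp
  define res where "res = (\<lambda>R R'. (e - 1 - int R' + int (k - r + 1) * int (R (k - r + 2)),
            \<lambda>j. if k - r + 2 \<le> j \<and> j \<le> k then c j - R j + R (j + 1) else 0))"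
  have cs: "chain_step k r u n t s = rbinoms u n t c js \<bind> (\<lambda>R. binom (nat (e + int t)) q \<bind> (\<lambda>R'. return_pmf (res R R')))"
    unfolding chain_step_def s js_def res_def qdef by simp
  show fin: "finite (set_pmf (chain_step k r u n t s))"
    unfolding cs using RP binom_finite by simp
  show "\<forall>s'\<in>set_pmf (chain_step k r u n t s). fst s' + int (Suc t) \<ge> 0"
  proof
    fix s' assume "s' \<in> set_pmf (chain_step k r u n t s)"
    then obtain R R' where "R' \<in> set_pmf (binom (nat (e + int t)) q)" "s' = res R R'"
      unfolding cs by auto
    then have "R' \<le> nat (e + int t)" "s' = res R R'" using binom_set by auto
    moreover have P: "0 \<le> int (k - r + 1) * int (R (k - r + 2))" by simp
    ultimately have Q: "int R' \<le> e + int t" "s' = res R R'" using st s by auto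
    have "fst s' = e - 1 - int R' + int (k - r + 1) * int (R (k - r + 2))" using Q(2) unfolding res_def by simp
    then show "fst s' + int (Suc t) \<ge> 0" using P Q(1) by linarith
  qed
  have supp: "R (Suc k) = 0" "\<And>j. j \<in> {k-r+2..k} \<Longrightarrow> R j \<le> c j" if "R \<in> set_pmf (rbinoms u n t c js)" for R
    using RP that sj by auto
  have FFres: "FF k r b a (res R R') = exp (b * real_of_int e - b + (\<Sum>j\<in>{k-r+2..k}. a j * real (c j)))
      * exp ((- b) * real R') * exp (\<Sum>j\<in>set js. dl k r b a j * real (R j))"
    if "R \<in> set_pmf (rbinoms u n t c js)" for R R'
  proof -
    have "(\<Sum>j\<in>{k-r+2..k}. a j * real (snd (res R R') j)) = (\<Sum>j\<in>{k-r+2..k}. a j * real (c j - R j + R (j + 1)))"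
      unfolding res_def by (intro sum.cong) auto
    moreover have "real_of_int (fst (res R R')) = real_of_int e - 1 - real R' + real (k-r+1) * real (R (k-r+2))"
      unfolding res_def by simp
    ultimately have "FF k r b a (res R R') = exp (b * (real_of_int e - 1 - real R' + real (k-r+1) * real (R (k-r+2)))
      + (\<Sum>j\<in>{k-r+2..k}. a j * real (c j - R j + R (j + 1))))"
      unfolding FF_def by simp
    also have "\<dots> = exp (b * real_of_int e - b + (\<Sum>j\<in>{k-r+2..k}. a j * real (c j)) + (- b) * real R'
      + (\<Sum>j\<in>{k-r+2..k}. dl k r b a j * real (R j)))"
      using exponent_identity[of r k R c b "real_of_int e" R' a, OF r supp[OF that]] by simp
    finally show ?thesis unfolding sj by (simp only: exp_add[symmetric])
  qed
  define A where "A = exp (b * real_of_int e - b + (\<Sum>j\<in>{k-r+2..k}. a j * real (c j)))"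
  have "measure_pmf.expectation (chain_step k r u n t s) (FF k r b a)
     = measure_pmf.expectation (rbinoms u n t c js) (\<lambda>R. measure_pmf.expectation (binom (nat (e + int t)) q)
          (\<lambda>R'. FF k r b a (res R R')))"
    unfolding cs using RP binom_finite
    by (subst exp_bind) (auto intro!: Bochner_Integration.integral_cong simp: exp_bind)
  also have "\<dots> = measure_pmf.expectation (rbinoms u n t c js) (\<lambda>R. A * exp (\<Sum>j\<in>set js. dl k r b a j * real (R j)) *
          measure_pmf.expectation (binom (nat (e + int t)) q) (\<lambda>R'. exp ((- b) * real R')))"
    by (intro integral_cong_AE) (auto simp: AE_measure_pmf_iff FFres A_def mult.commute mult.left_commute)
  also have "\<dots> = measure_pmf.expectation (rbinoms u n t c js) (\<lambda>R. (A * beta q b ^ nat (e + int t)) * exp (\<Sum>j\<in>set js. dl k r b a j * real (R j)))"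
    unfolding binom_mgf beta_def by (simp add: mult_ac)
  also have "\<dots> = A * beta q b ^ nat (e + int t) * measure_pmf.expectation (rbinoms u n t c js) (\<lambda>R. exp (\<Sum>j\<in>set js. dl k r b a j * real (R j)))"
    by simp
  also have "\<dots> = A * beta q b ^ nat (e + int t) * (\<Prod>j\<in>{k-r+2..k}. gam (real j / NN u n t) (dl k r b a j) ^ c j)"
    using RP sj by (simp add: gam_def)
  also have "\<dots> = KK k r u n t b * FF k r (stepb k r u n t b) (stepa k r u n t b a) s"
  proof -
    have bp: "beta q b ^ nat (e + int t) = exp (real_of_int (e + int t) * ln (beta q b))"
    proof -
      have "real (nat (e + int t)) = real_of_int (e + int t)" using st s by simp
      moreover have "beta q b ^ nat (e + int t) = exp (real (nat (e + int t)) * ln (beta q b))"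
        using beta_pos[of q b] by (simp add: exp_of_nat_mult exp_ln)
      ultimately show ?thesis by simp
    qed
    have gp: "(\<Prod>j\<in>{k-r+2..k}. gam (real j / NN u n t) (dl k r b a j) ^ c j)
       = exp (\<Sum>j\<in>{k-r+2..k}. real (c j) * ln (gam (real j / NN u n t) (dl k r b a j)))"
    proof -
      have "\<And>j. gam (real j / NN u n t) (dl k r b a j) ^ c j = exp (real (c j) * ln (gam (real j / NN u n t) (dl k r b a j)))"
        using gam_pos by (simp add: exp_of_nat_mult exp_ln)
      then show ?thesis by (simp add: exp_sum)
    qed
    show ?thesis unfolding bp gp KK_def FF_def stepb_def stepa_def A_def s q_def[symmetric]
      by (simp add: exp_add[symmetric] algebra_simps sum.distrib)
  qed
  finally show "measure_pmf.expectation (chain_step k r u n t s) (FF k r b a)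
       = KK k r u n t b * FF k r (stepb k r u n t b) (stepa k r u n t b a) s" .
qed

lemma categorical_props:
  assumes nn: "\<And>j. 0 \<le> p j" and sm: "(\<Sum>j\<le>k. p j) = 1"
  shows "set_pmf (categorical k p) \<subseteq> {..k}"
    "measure_pmf.expectation (categorical k p) h = (\<Sum>j\<le>k. p j * h j)"
proof -
  define f where "f = (\<lambda>j. if j \<le> k then p j else 0)"
  have f0: "\<And>x. 0 \<le> f x" using nn unfolding f_def by auto
  have "(\<integral>\<^sup>+x. ennreal (f x) \<partial>count_space UNIV) = (\<Sum>x\<in>{..k}. ennreal (f x))"
    by (rule nn_integral_count_space') (auto simp: f_def)
  also have "\<dots> = ennreal (\<Sum>x\<in>{..k}. f x)" using f0 by (simp add: sum_ennreal)
  also have "(\<Sum>x\<in>{..k}. f x) = 1" using sm unfolding f_def by simp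
  finally have f1: "(\<integral>\<^sup>+x. ennreal (f x) \<partial>count_space UNIV) = 1" by simp
  have pm: "pmf (categorical k p) x = f x" for x
    unfolding categorical_def f_def[symmetric] using pmf_embed_pmf[OF f0 f1] by simp
  show st: "set_pmf (categorical k p) \<subseteq> {..k}"
    using pm by (auto simp: set_pmf_iff f_def split: if_splits)
  show "measure_pmf.expectation (categorical k p) h = (\<Sum>j\<le>k. p j * h j)"
    using st by (subst integral_measure_pmf[of "{..k}"]) (auto simp: pm f_def)
qed

lemma multinomial_props:
  fixes \<theta> :: "nat \<Rightarrow> real"
  assumes nn: "\<And>j. 0 \<le> p j" and sm: "(\<Sum>j\<le>k. p j) = 1"
  shows "finite (set_pmf (multinomial k p m)) \<and>
    measure_pmf.expectation (multinomial k p m) (\<lambda>C. exp (\<Sum>j\<le>k. \<theta> j * real (C j))) = (\<Sum>j\<le>k. p j * exp (\<theta> j)) ^ m"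
proof (induction m)
  case 0
  then show ?case by simp
next
  case (Suc m)
  note cat = categorical_props[OF nn sm]
  have fc: "finite (set_pmf (categorical k p))" using cat(1) finite_subset by blast
  have fin: "finite (set_pmf (multinomial k p (Suc m)))" using Suc fc by simp
  have ex: "(\<Sum>i\<le>k. \<theta> i * real ((C(j := C j + 1)) i)) = \<theta> j + (\<Sum>i\<le>k. \<theta> i * real (C i))" if "j \<le> k" for C j
  proof -
    have "(\<Sum>i\<le>k. \<theta> i * real ((C(j := C j + 1)) i)) = (\<Sum>i\<le>k. \<theta> i * real (C i) + (if i = j then \<theta> i else 0))"
      by (intro sum.cong) (auto simp: algebra_simps)
    also have "\<dots> = \<theta> j + (\<Sum>i\<le>k. \<theta> i * real (C i))" using that by (simp add: sum.distrib)
    finally show ?thesis .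
  qed
  have inner: "measure_pmf.expectation (categorical k p \<bind> (\<lambda>j. return_pmf (C(j := C j + 1)))) (\<lambda>C. exp (\<Sum>j\<le>k. \<theta> j * real (C j)))
     = (\<Sum>j\<le>k. p j * exp (\<theta> j)) * exp (\<Sum>j\<le>k. \<theta> j * real (C j))" for C
  proof -
    have "measure_pmf.expectation (categorical k p \<bind> (\<lambda>j. return_pmf (C(j := C j + 1)))) (\<lambda>C. exp (\<Sum>j\<le>k. \<theta> j * real (C j)))
      = measure_pmf.expectation (categorical k p) (\<lambda>j. exp (\<Sum>i\<le>k. \<theta> i * real ((C(j := C j + 1)) i)))"
      using fc by (subst exp_bind) auto
    also have "\<dots> = (\<Sum>j\<le>k. p j * exp (\<Sum>i\<le>k. \<theta> i * real ((C(j := C j + 1)) i)))" by (rule cat(2))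
    also have "\<dots> = (\<Sum>j\<le>k. p j * (exp (\<theta> j) * exp (\<Sum>i\<le>k. \<theta> i * real (C i))))"
      by (intro sum.cong refl) (simp only: ex exp_add atMost_iff)
    finally show ?thesis by (simp add: sum_distrib_right mult_ac)
  qed
  have "measure_pmf.expectation (multinomial k p (Suc m)) (\<lambda>C. exp (\<Sum>j\<le>k. \<theta> j * real (C j)))
     = measure_pmf.expectation (multinomial k p m) (\<lambda>C. (\<Sum>j\<le>k. p j * exp (\<theta> j)) * exp (\<Sum>j\<le>k. \<theta> j * real (C j)))"
    unfolding multinomial.simps
    apply (subst exp_bind[OF conjunct1[OF Suc]])
    using fc apply simp
    apply (simp only: inner)
    done
  also have "\<dots> = (\<Sum>j\<le>k. p j * exp (\<theta> j)) ^ Suc m" using Suc by simp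
  finally show ?case using fin by blast
qed

lemma chain_props:
  assumes r: "2 \<le> r" "r \<le> k" and nn: "\<And>j. 0 \<le> pj k u n j" and sm: "(\<Sum>j\<le>k. pj k u n j) = 1"
  shows "finite (set_pmf (chain k r u n m t)) \<and> (\<forall>s\<in>set_pmf (chain k r u n m t). fst s + int t \<ge> 0)"
proof (induction t)
  case 0
  have "finite (set_pmf (multinomial k (pj k u n) m))" using multinomial_props[OF nn sm] by blast
  then show ?case by (auto simp: chain_init_def intro!: add_nonneg_nonneg sum_nonneg mult_nonneg_nonneg)
next
  case (Suc t)
  show ?case
  proof
    show "finite (set_pmf (chain k r u n m (Suc t)))" using Suc step_mgf(1)[OF r] by auto
    show "\<forall>s'\<in>set_pmf (chain k r u n m (Suc t)). fst s' + int (Suc t) \<ge> 0"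
    proof
      fix s' assume "s' \<in> set_pmf (chain k r u n m (Suc t))"
      then obtain s where "s \<in> set_pmf (chain k r u n m t)" "s' \<in> set_pmf (chain_step k r u n t s)" by auto
      then show "fst s' + int (Suc t) \<ge> 0" using Suc step_mgf(2)[OF r, of s t u n] by blast
    qed
  qed
qed

lemma chain_step_expect:
  assumes r: "2 \<le> r" "r \<le> k" and nn: "\<And>j. 0 \<le> pj k u n j" and sm: "(\<Sum>j\<le>k. pj k u n j) = 1"
  shows "measure_pmf.expectation (chain k r u n m (Suc t)) (FF k r b a)
    = KK k r u n t b * measure_pmf.expectation (chain k r u n m t) (FF k r (stepb k r u n t b) (stepa k r u n t b a))"
proof -
  note CP = chain_props[OF r nn sm, of m t]
  have "measure_pmf.expectation (chain k r u n m (Suc t)) (FF k r b a)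
     = measure_pmf.expectation (chain k r u n m t) (\<lambda>s. measure_pmf.expectation (chain_step k r u n t s) (FF k r b a))"
    using CP step_mgf(1)[OF r] by (simp add: exp_bind)
  also have "\<dots> = measure_pmf.expectation (chain k r u n m t) (\<lambda>s. KK k r u n t b * FF k r (stepb k r u n t b) (stepa k r u n t b a) s)"
    using CP step_mgf(3)[OF r] by (intro integral_cong_AE) (auto simp: AE_measure_pmf_iff)
  finally show ?thesis by simp
qed

lemma init_expect:
  assumes r: "2 \<le> r" "r \<le> k" and nn: "\<And>j. 0 \<le> pj k u n j" and sm: "(\<Sum>j\<le>k. pj k u n j) = 1"
  shows "measure_pmf.expectation (chain k r u n m 0) (FF k r b a)
    = (\<Sum>j\<le>k. pj k u n j * exp (if 1 \<le> j \<and> j \<le> k - r + 1 then b * real j else if k - r + 2 \<le> j \<and> j \<le> k then a j else 0)) ^ m"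
proof -
  define \<theta> where "\<theta> = (\<lambda>j. if 1 \<le> j \<and> j \<le> k - r + 1 then b * real j else if k - r + 2 \<le> j \<and> j \<le> k then a j else 0)"
  have key: "FF k r b a (int (\<Sum>j = 1..k - r + 1. j * C j), \<lambda>j. if k - r + 2 \<le> j \<and> j \<le> k then C j else 0)
      = exp (\<Sum>j\<le>k. \<theta> j * real (C j))" for C
  proof -
    have u: "{..k} = {..k-r+1} \<union> {k-r+2..k}" using r by auto
    have d: "{..k-r+1} \<inter> {k-r+2..k} = {}" by auto
    have s1: "(\<Sum>j\<le>k. \<theta> j * real (C j)) = (\<Sum>j\<le>k-r+1. \<theta> j * real (C j)) + (\<Sum>j\<in>{k-r+2..k}. \<theta> j * real (C j))"
      unfolding u by (rule sum.union_disjoint) (use d in auto)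
    have s2: "(\<Sum>j\<le>k-r+1. \<theta> j * real (C j)) = b * real (\<Sum>j = 1..k - r + 1. j * C j)"
    proof -
      have "(\<Sum>j\<le>k-r+1. \<theta> j * real (C j)) = (\<Sum>j\<in>{1..k-r+1}. \<theta> j * real (C j))"
        by (rule sum.mono_neutral_right) (auto simp: \<theta>_def)
      also have "\<dots> = (\<Sum>j\<in>{1..k-r+1}. b * (real j * real (C j)))"
        by (intro sum.cong) (auto simp: \<theta>_def)
      finally show ?thesis by (simp only: of_nat_sum of_nat_mult sum_distrib_left)
    qed
    have s3: "(\<Sum>j\<in>{k-r+2..k}. \<theta> j * real (C j)) = (\<Sum>j\<in>{k-r+2..k}. a j * real (if k - r + 2 \<le> j \<and> j \<le> k then C j else 0))"
      by (intro sum.cong) (auto simp: \<theta>_def)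
    show ?thesis unfolding FF_def s1 s2 s3 by simp
  qed
  have "measure_pmf.expectation (chain k r u n m 0) (FF k r b a)
      = measure_pmf.expectation (multinomial k (pj k u n) m) (\<lambda>C. exp (\<Sum>j\<le>k. \<theta> j * real (C j)))"
    by (simp only: chain.simps chain_init_def integral_map_pmf key)
  also have "\<dots> = (\<Sum>j\<le>k. pj k u n j * exp (\<theta> j)) ^ m"
    using multinomial_props[OF nn sm] by blast
  finally show ?thesis unfolding \<theta>_def .
qed

primrec bk :: "nat \<Rightarrow> nat \<Rightarrow> (nat \<Rightarrow> nat) \<Rightarrow> nat \<Rightarrow> real \<Rightarrow> nat \<Rightarrow> nat \<Rightarrow> real \<times> (nat \<Rightarrow> real)" where
  "bk k r u n lam T 0 = (lam, \<lambda>_. 0)"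
| "bk k r u n lam T (Suc S) = (stepb k r u n (T - Suc S) (fst (bk k r u n lam T S)),
     stepa k r u n (T - Suc S) (fst (bk k r u n lam T S)) (snd (bk k r u n lam T S)))"

lemma iterate_expect:
  assumes r: "2 \<le> r" "r \<le> k" and nn: "\<And>j. 0 \<le> pj k u n j" and sm: "(\<Sum>j\<le>k. pj k u n j) = 1"
  shows "S \<le> T \<Longrightarrow> measure_pmf.expectation (chain k r u n m T) (\<lambda>s. exp (lam * real_of_int (fst s)))
    = (\<Prod>i<S. KK k r u n (T - Suc i) (fst (bk k r u n lam T i))) *
      measure_pmf.expectation (chain k r u n m (T - S)) (FF k r (fst (bk k r u n lam T S)) (snd (bk k r u n lam T S)))"
proof (induction S)
  case 0
  then show ?case by (simp add: FF_def)
next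
  case (Suc S)
  have e: "T - S = Suc (T - Suc S)" using Suc by simp
  show ?case using Suc chain_step_expect[OF r nn sm, of m "T - Suc S"] unfolding e by (simp add: mult_ac)
qed

theorem exact_formula:
  assumes r: "2 \<le> r" "r \<le> k" and nn: "\<And>j. 0 \<le> pj k u n j" and sm: "(\<Sum>j\<le>k. pj k u n j) = 1"
  shows "measure_pmf.expectation (chain k r u n m T) (\<lambda>s. exp (lam * real_of_int (fst s)))
    = (\<Prod>i<T. KK k r u n (T - Suc i) (fst (bk k r u n lam T i))) *
      (\<Sum>j\<le>k. pj k u n j * exp (if 1 \<le> j \<and> j \<le> k - r + 1 then fst (bk k r u n lam T T) * real j
          else if k - r + 2 \<le> j \<and> j \<le> k then snd (bk k r u n lam T T) j else 0)) ^ m"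
  using iterate_expect[OF r nn sm, of T T m lam] init_expect[OF r nn sm] by simp




lemma exp_quad:
  fixes z :: real assumes "\<bar>z\<bar> \<le> 1"
  shows "0 \<le> exp z - 1 - z" "exp z - 1 - z \<le> z\<^sup>2"
proof -
  show "0 \<le> exp z - 1 - z" using exp_ge_add_one_self[of z] by linarith
  show "exp z - 1 - z \<le> z\<^sup>2"
  proof (cases "0 \<le> z")
    case True
    then show ?thesis using exp_bound[of z] assms by simp
  next
    case False
    define w where "w = - z"
    have w: "0 < w" "w \<le> 1" using False assms unfolding w_def by auto
    have "exp w \<ge> 1 + w" by simp
    then have "exp (-w) \<le> 1 / (1 + w)" using w by (simp add: exp_minus field_simps)
    also have "1 / (1 + w) \<le> 1 - w + w\<^sup>2"
    proof -
      have "1 \<le> (1 + w) * (1 - w + w\<^sup>2)" using w by (simp add: power2_eq_square algebra_simps)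
      then show ?thesis using w by (simp add: field_simps)
    qed
    finally show ?thesis unfolding w_def by (simp add: power2_eq_square)
  qed
qed

lemma exp_lin: fixes z :: real assumes "\<bar>z\<bar> \<le> 1" shows "\<bar>exp z - 1\<bar> \<le> 2 * \<bar>z\<bar>"
proof -
  have "z\<^sup>2 = \<bar>z\<bar> * \<bar>z\<bar>" by (simp add: power2_eq_square abs_mult_self_eq)
  also have "\<dots> \<le> \<bar>z\<bar> * 1" using assms by (intro mult_left_mono) auto
  finally have "z\<^sup>2 \<le> \<bar>z\<bar>" by simp
  then show ?thesis using exp_quad[OF assms] by linarith
qed

lemma exp_quad_abs: fixes z :: real assumes "\<bar>z\<bar> \<le> 1" shows "\<bar>exp z - 1 - z\<bar> \<le> z\<^sup>2"
  using exp_quad[OF assms] by linarith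

lemma ln_lin: fixes y :: real assumes "\<bar>y\<bar> \<le> 1/2" shows "\<bar>ln (1 + y)\<bar> \<le> 2 * \<bar>y\<bar>"
proof -
  have "2 * y\<^sup>2 \<le> \<bar>y\<bar>"
  proof -
    have "2 * y\<^sup>2 = \<bar>y\<bar> * (2 * \<bar>y\<bar>)" by (simp add: power2_eq_square abs_mult_self_eq)
    also have "\<dots> \<le> \<bar>y\<bar> * 1" using assms by (intro mult_left_mono) auto
    finally show ?thesis by simp
  qed
  then show ?thesis using abs_ln_one_plus_x_minus_x_bound[OF assms] by linarith
qed

lemma exp_lip: fixes a b :: real assumes "\<bar>a - b\<bar> \<le> 1" shows "\<bar>exp a - exp b\<bar> \<le> 2 * exp b * \<bar>a - b\<bar>"
proof -
  have "exp a - exp b = exp b * (exp (a - b) - 1)" by (simp add: exp_diff field_simps)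
  then have "\<bar>exp a - exp b\<bar> = exp b * \<bar>exp (a - b) - 1\<bar>" by (simp add: abs_mult)
  also have "\<dots> \<le> exp b * (2 * \<bar>a - b\<bar>)" using exp_lin[OF assms] by (intro mult_left_mono) auto
  finally show ?thesis by simp
qed

locale Sett =
  fixes k r :: nat and lam mu tau :: real
  assumes r2: "2 \<le> r" and rk: "r \<le> k" and mu: "0 < mu" and tau: "0 < tau"
begin

definition TT :: "(nat \<Rightarrow> nat) \<Rightarrow> nat \<Rightarrow> nat" where "TT u n = nat \<lfloor>tau * real (u n)\<rfloor>"
definition bb where "bb u n S = fst (bk k r u n lam (TT u n) S)"
definition aa where "aa u n S = snd (bk k r u n lam (TT u n) S)"
definition Cb :: real where "Cb = 4 * (exp (\<bar>lam\<bar> + 1) + 1)"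

definition good0 :: "(nat \<Rightarrow> nat) \<Rightarrow> nat \<Rightarrow> bool" where
  "good0 u n \<longleftrightarrow> 1 \<le> real (u n) \<and> 4 * (1 + tau) * real (u n) \<le> real n \<and> 8 * (real k + 1) \<le> real n
     \<and> Cb \<le> real n \<and> Cb * tau * real (u n) \<le> real n"

lemma Cb_pos: "Cb > 0" unfolding Cb_def by (simp add: add_pos_pos)

lemma TT_bounds: "real (TT u n) \<le> tau * real (u n)" "tau * real (u n) - 1 \<le> real (TT u n)"
proof -
  have "0 \<le> tau * real (u n)" using tau by simp
  then show "real (TT u n) \<le> tau * real (u n)" unfolding TT_def by linarith
  show "tau * real (u n) - 1 \<le> real (TT u n)" unfolding TT_def by linarith
qed

lemma good0_facts:
  assumes g: "good0 u n" and t: "t \<le> TT u n"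
  shows "NN u n t \<ge> 3/4 * real n" "0 < real n" "real (TT u n) \<le> real n / 4"
proof -
  have T: "real (TT u n) \<le> tau * real (u n)" by (rule TT_bounds)
  have tt: "real t \<le> tau * real (u n)" using t T by linarith
  have "4 * (1 + tau) * real (u n) = 4 * real (u n) + 4 * (tau * real (u n))" by (simp add: algebra_simps)
  then have "real (u n) + tau * real (u n) \<le> real n / 4" using g unfolding good0_def by linarith
  then show "NN u n t \<ge> 3/4 * real n" using tt unfolding NN_def by linarith
  have "0 \<le> real k" by simp
  moreover from g have "8 * (real k + 1) \<le> real n" unfolding good0_def by simp
  ultimately show "0 < real n" by (simp add: algebra_simps)
  show "real (TT u n) \<le> real n / 4" using g T \<open>real (u n) + tau * real (u n) \<le> real n / 4\<close>
    unfolding good0_def by (smt (verit) of_nat_0_le_iff)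
qed

lemma qq_bounds:
  assumes g: "good0 u n" and t: "t \<le> TT u n"
  shows "0 < qq k r u n t" "qq k r u n t \<le> 2 / real n" "clamp (qq k r u n t) = qq k r u n t"
proof -
  note f = good0_facts[OF g t]
  have kn: "8 * (real k + 1) \<le> real n" using g unfolding good0_def by simp
  have D: "NN u n t - real k + real r \<ge> real n / 2" using f kn by simp
  have Dp: "NN u n t - real k + real r > 0" using D f by linarith
  show "0 < qq k r u n t" unfolding qq_def using Dp by simp
  show q2: "qq k r u n t \<le> 2 / real n" unfolding qq_def using D Dp f
    by (simp add: divide_simps)
  have "2 / real n \<le> 1" using kn f by (simp add: divide_simps)
  then show "clamp (qq k r u n t) = qq k r u n t" unfolding clamp_def using q2 \<open>0 < qq k r u n t\<close> by simp
qed

lemma ss_bounds: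
  assumes g: "good0 u n" and t: "t \<le> TT u n" and j: "j \<le> k"
  shows "0 \<le> real j / NN u n t" "real j / NN u n t \<le> 2 * real k / real n" "clamp (real j / NN u n t) = real j / NN u n t"
    "real j / NN u n t \<le> 1/4"
proof -
  note f = good0_facts[OF g t]
  have kn: "8 * (real k + 1) \<le> real n" using g unfolding good0_def by simp
  have Np: "NN u n t > 0" using f by linarith
  show "0 \<le> real j / NN u n t" using Np by simp
  have "real j / NN u n t \<le> real k / (3/4 * real n)"
    using Np f j by (intro frac_le) auto
  also have "\<dots> \<le> 2 * real k / real n" using f by (simp add: divide_simps)
  finally show s2: "real j / NN u n t \<le> 2 * real k / real n" .
  have "2 * real k / real n \<le> 1/4" using kn f by (simp add: divide_simps)
  then show "real j / NN u n t \<le> 1/4" using s2 by linarith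
  then have "real j / NN u n t \<le> 1" by linarith
  then show "clamp (real j / NN u n t) = real j / NN u n t" unfolding clamp_def using \<open>0 \<le> real j / NN u n t\<close> by simp
qed

lemma bb_Suc: "bb u n (Suc S) = bb u n S + ln (beta (qq k r u n (TT u n - Suc S)) (bb u n S))"
  unfolding bb_def by (simp add: stepb_def)

lemma beta_ln:
  assumes g: "good0 u n" and t: "t \<le> TT u n" and b: "\<bar>b - lam\<bar> \<le> 1"
  shows "\<bar>ln (beta (qq k r u n t) b)\<bar> \<le> Cb / real n"
proof -
  note q = qq_bounds[OF g t]
  define q' where "q' = qq k r u n t"
  have n0: "0 < real n" using good0_facts[OF g t] by simp
  have eb: "\<bar>exp (-b) - 1\<bar> \<le> exp (\<bar>lam\<bar> + 1) + 1"
  proof -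
    have "exp (-b) \<le> exp (\<bar>lam\<bar> + 1)" using b by simp
    then show ?thesis by (smt (verit) exp_gt_zero)
  qed
  have y: "\<bar>q' * (exp (-b) - 1)\<bar> \<le> 2 / real n * (exp (\<bar>lam\<bar> + 1) + 1)"
    unfolding abs_mult using q eb unfolding q'_def
    by (intro mult_mono) auto
  also have "\<dots> = Cb / 2 / real n" unfolding Cb_def using n0 by (simp add: field_simps)
  finally have y2: "\<bar>q' * (exp (-b) - 1)\<bar> \<le> Cb / 2 / real n" .
  have "Cb / 2 / real n \<le> 1/2" using g n0 unfolding good0_def by (simp add: divide_simps)
  then have "\<bar>ln (1 + q' * (exp (-b) - 1))\<bar> \<le> 2 * \<bar>q' * (exp (-b) - 1)\<bar>"
    using y2 by (intro ln_lin) linarith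
  moreover have "beta (qq k r u n t) b = 1 + q' * (exp (-b) - 1)"
    unfolding beta_def q(3) q'_def by (simp add: algebra_simps)
  ultimately show ?thesis using y2 by simp
qed

lemma bb_bound:
  assumes g: "good0 u n"
  shows "S \<le> TT u n \<Longrightarrow> \<bar>bb u n S - lam\<bar> \<le> Cb * real S / real n"
proof (induction S)
  case 0
  then show ?case by (simp add: bb_def)
next
  case (Suc S)
  have n0: "0 < real n" using good0_facts[OF g, of 0] by simp
  have IH: "\<bar>bb u n S - lam\<bar> \<le> Cb * real S / real n" using Suc by simp
  have "Cb * real S / real n \<le> Cb * tau * real (u n) / real n"
    using Suc(2) TT_bounds[of u n] Cb_pos n0 by (simp add: divide_simps)
  also have "\<dots> \<le> 1" using g n0 unfolding good0_def by (simp add: divide_simps)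
  finally have b1: "\<bar>bb u n S - lam\<bar> \<le> 1" using IH by linarith
  have "\<bar>ln (beta (qq k r u n (TT u n - Suc S)) (bb u n S))\<bar> \<le> Cb / real n"
    using beta_ln[OF g _ b1] by simp
  then show ?case using IH unfolding bb_Suc by (simp add: add_divide_distrib algebra_simps)
qed

lemma bb_le1: assumes g: "good0 u n" and S: "S \<le> TT u n" shows "\<bar>bb u n S - lam\<bar> \<le> 1"
proof -
  have n0: "0 < real n" using good0_facts[OF g, of 0] by simp
  have "Cb * real S / real n \<le> Cb * tau * real (u n) / real n"
    using S TT_bounds[of u n] Cb_pos n0 by (simp add: divide_simps)
  also have "\<dots> \<le> 1" using g n0 unfolding good0_def by (simp add: divide_simps)
  finally show ?thesis using bb_bound[OF g S] by linarith
qed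

lemma lnP_bound:
  assumes g: "good0 u n"
  shows "\<bar>ln (\<Prod>i<TT u n. KK k r u n (TT u n - Suc i) (bb u n i)) + lam * tau * real (u n)\<bar>
     \<le> \<bar>lam\<bar> + 2 * Cb * tau\<^sup>2 * (real (u n))\<^sup>2 / real n"
proof -
  define T where "T = TT u n"
  have n0: "0 < real n" using good0_facts[OF g, of 0] by simp
  have lnP: "ln (\<Prod>i<T. KK k r u n (T - Suc i) (bb u n i))
     = (\<Sum>i<T. - bb u n i + real (T - Suc i) * ln (beta (qq k r u n (T - Suc i)) (bb u n i)))"
    unfolding KK_def by (simp add: exp_sum[symmetric])
  have e1: "\<bar>- bb u n i + real (T - Suc i) * ln (beta (qq k r u n (T - Suc i)) (bb u n i)) + lam\<bar>
      \<le> Cb * real T / real n + real T * (Cb / real n)" if "i < T" for i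
  proof -
    have "\<bar>bb u n i - lam\<bar> \<le> Cb * real i / real n" using bb_bound[OF g, of i] that unfolding T_def by simp
    also have "\<dots> \<le> Cb * real T / real n" using that Cb_pos n0 by (simp add: divide_simps)
    finally have A: "\<bar>bb u n i - lam\<bar> \<le> Cb * real T / real n" .
    have B: "\<bar>ln (beta (qq k r u n (T - Suc i)) (bb u n i))\<bar> \<le> Cb / real n"
      using beta_ln[OF g _ bb_le1[OF g]] that unfolding T_def by simp
    have "\<bar>real (T - Suc i) * ln (beta (qq k r u n (T - Suc i)) (bb u n i))\<bar> \<le> real T * (Cb / real n)"
      unfolding abs_mult using B by (intro mult_mono) auto
    then show ?thesis using A by linarith
  qed
  have "\<bar>(\<Sum>i<T. - bb u n i + real (T - Suc i) * ln (beta (qq k r u n (T - Suc i)) (bb u n i))) + lam * real T\<bar>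
      = \<bar>\<Sum>i<T. (- bb u n i + real (T - Suc i) * ln (beta (qq k r u n (T - Suc i)) (bb u n i)) + lam)\<bar>"
    by (simp add: sum.distrib mult.commute)
  also have "\<dots> \<le> (\<Sum>i<T. \<bar>- bb u n i + real (T - Suc i) * ln (beta (qq k r u n (T - Suc i)) (bb u n i)) + lam\<bar>)"
    by (rule sum_abs)
  also have "\<dots> \<le> (\<Sum>i<T. Cb * real T / real n + real T * (Cb / real n))"
    using e1 by (intro sum_mono) auto
  also have "\<dots> = 2 * Cb * (real T)\<^sup>2 / real n" by (simp add: power2_eq_square field_simps)
  also have "\<dots> \<le> 2 * Cb * tau\<^sup>2 * (real (u n))\<^sup>2 / real n"
  proof -
    have "real T \<le> tau * real (u n)" using TT_bounds unfolding T_def by simp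
    then have "(real T)\<^sup>2 \<le> (tau * real (u n))\<^sup>2" by (intro power_mono) auto
    then show ?thesis using Cb_pos n0 by (simp add: divide_simps power_mult_distrib)
  qed
  finally have M: "\<bar>ln (\<Prod>i<T. KK k r u n (T - Suc i) (bb u n i)) + lam * real T\<bar> \<le> 2 * Cb * tau\<^sup>2 * (real (u n))\<^sup>2 / real n"
    unfolding lnP .
  have "\<bar>lam * real T - lam * tau * real (u n)\<bar> \<le> \<bar>lam\<bar>"
  proof -
    have "\<bar>real T - tau * real (u n)\<bar> \<le> 1" using TT_bounds[of u n] unfolding T_def by linarith
    then have "\<bar>lam\<bar> * \<bar>real T - tau * real (u n)\<bar> \<le> \<bar>lam\<bar>" by (simp add: mult_left_le)
    then show ?thesis by (simp add: abs_mult[symmetric] algebra_simps)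
  qed
  then show ?thesis using M unfolding T_def by linarith
qed

end




context Sett begin

definition LL :: nat where "LL = k - r + 1"
definition cc :: real where "cc = exp (real LL * lam) - 1"
definition ahat :: "nat \<Rightarrow> nat \<Rightarrow> nat \<Rightarrow> real" where
  "ahat n i S = cc * pochhammer (real LL + 1) i * real (S choose i) / real n ^ i"
definition KA :: real where "KA = \<bar>cc\<bar> * real k ^ k * (1 + tau) ^ k + 1"
definition E1 :: real where "E1 = exp (real LL * \<bar>lam\<bar> + 1) + 1"
definition M1 :: real where
  "M1 = 8 * (real k)\<^sup>2 * E1\<^sup>2 + 4 * real k * exp (real LL * \<bar>lam\<bar>) * (real LL * Cb * tau + KA) + 2 * real k * (1 + tau) * \<bar>cc\<bar>"
definition D0 :: real where
  "D0 = 128 * (real k)\<^sup>2 * KA\<^sup>2 + 8 * real k * KA\<^sup>2 + 2 * real k * KA + 2 * real k * (1 + tau) * KA"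
primrec Mf :: "nat \<Rightarrow> real" where
  "Mf 0 = M1"
| "Mf (Suc i) = 2 * real k * tau * Mf i + D0"
definition Mbig :: real where "Mbig = (\<Sum>i<k. Mf i)"

definition good1 :: "(nat \<Rightarrow> nat) \<Rightarrow> nat \<Rightarrow> bool" where
  "good1 u n \<longleftrightarrow> good0 u n \<and> Mbig * tau * real (u n) \<le> real n \<and> 2 * KA * real (u n) \<le> real n
     \<and> (real LL * Cb * tau + KA) * real (u n) \<le> real n \<and> 16 * real k * KA \<le> real n \<and> 4 * real k * E1 \<le> real n"

lemma LL_facts: "LL \<ge> 1" "LL + (r - 1) = k" "k - r + 2 = LL + 1" "1 \<le> k" "LL + 1 \<le> k" "1 \<le> r - 1"
  using r2 rk unfolding LL_def by auto

lemma KA_ge1: "KA \<ge> 1" unfolding KA_def using tau by simp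
lemma E1_pos: "E1 > 0" unfolding E1_def by (simp add: add_pos_pos)
lemma M1_nonneg: "M1 \<ge> 0" unfolding M1_def using Cb_pos KA_ge1 tau
  by (intro add_nonneg_nonneg mult_nonneg_nonneg) auto
lemma D0_nonneg: "D0 \<ge> 0" unfolding D0_def using KA_ge1 tau
  by (intro add_nonneg_nonneg mult_nonneg_nonneg) auto
lemma Mf_nonneg: "Mf i \<ge> 0"
  by (induction i) (use M1_nonneg D0_nonneg tau in auto)
lemma Mf_le_Mbig: "i < k \<Longrightarrow> Mf i \<le> Mbig"
  unfolding Mbig_def using Mf_nonneg by (intro member_le_sum) auto

lemma ahat_rec: "ahat n (Suc i) (Suc S) = ahat n (Suc i) S + (real LL + real (Suc i)) / real n * ahat n i S"
proof -
  have "ahat n (Suc i) (Suc S) = cc * pochhammer (real LL + 1) (Suc i) * (real (S choose i) + real (S choose Suc i)) / real n ^ Suc i"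
    unfolding ahat_def by simp
  also have "\<dots> = ahat n (Suc i) S + cc * pochhammer (real LL + 1) (Suc i) * real (S choose i) / real n ^ Suc i"
    unfolding ahat_def by (simp add: add_divide_distrib algebra_simps)
  also have "cc * pochhammer (real LL + 1) (Suc i) * real (S choose i) / real n ^ Suc i
      = (real LL + real (Suc i)) / real n * ahat n i S"
    unfolding ahat_def pochhammer_Suc by (simp add: field_simps)
  finally show ?thesis .
qed

lemma ahat_0: "ahat n 0 S = cc" unfolding ahat_def by simp
lemma ahat_S0: "i \<ge> 1 \<Longrightarrow> ahat n i 0 = 0" unfolding ahat_def by simp

definition xx :: "(nat \<Rightarrow> nat) \<Rightarrow> nat \<Rightarrow> real" where "xx u n = real (u n) / real n"

lemma x_facts:
  assumes g: "good0 u n"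
  shows "0 < xx u n" "xx u n \<le> 1" "1 / real n \<le> xx u n" "0 < real n"
    "S \<le> TT u n \<Longrightarrow> real S / real n \<le> tau * xx u n"
proof -
  have n0: "0 < real n" using good0_facts[OF g, of 0] by simp
  then show "0 < real n" .
  have U1: "1 \<le> real (u n)" using g unfolding good0_def by simp
  then show "0 < xx u n" unfolding xx_def using n0 by simp
  show "1 / real n \<le> xx u n" unfolding xx_def using U1 n0 by (simp add: divide_right_mono)
  have "4 * (1 + tau) * real (u n) \<le> real n" using g unfolding good0_def by simp
  moreover have "real (u n) \<le> 4 * (1 + tau) * real (u n)" using tau by (simp add: algebra_simps)
  ultimately show "xx u n \<le> 1" unfolding xx_def using n0 by simp
  assume "S \<le> TT u n"
  then have "real S \<le> tau * real (u n)" using TT_bounds[of u n] by linarith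
  then show "real S / real n \<le> tau * xx u n" unfolding xx_def using n0 by (simp add: divide_right_mono)
qed

lemma ss_close:
  assumes g: "good0 u n" and t: "t \<le> TT u n" and j: "j \<le> k"
  shows "\<bar>real j / NN u n t - real j / real n\<bar> \<le> 2 * real k * (1 + tau) * xx u n / real n"
proof -
  note f = good0_facts[OF g t]
  have Np: "NN u n t > 0" using f by linarith
  have tt: "real t \<le> tau * real (u n)" using t TT_bounds[of u n] by linarith
  have "real j / NN u n t - real j / real n = real j * (real (u n) + real t) / (NN u n t * real n)"
    using Np f unfolding NN_def by (simp add: field_simps)
  moreover have "0 \<le> real j * (real (u n) + real t) / (NN u n t * real n)" using Np f by simp
  moreover have "real j * (real (u n) + real t) / (NN u n t * real n) \<le> real k * ((1 + tau) * real (u n)) / (3/4 * real n * real n)"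
    using Np f j tt tau by (intro frac_le mult_mono mult_pos_pos) (auto simp: algebra_simps)
  moreover have "real k * ((1 + tau) * real (u n)) / (3/4 * real n * real n) \<le> 2 * real k * (1 + tau) * xx u n / real n"
    using f tau unfolding xx_def by (simp add: divide_simps)
  ultimately show ?thesis by simp
qed

lemma aa_Suc: "aa u n (Suc S) j = aa u n S j + ln (gam (real j / NN u n (TT u n - Suc S)) (dl k r (bb u n S) (aa u n S) j))"
  unfolding aa_def bb_def by (simp add: stepa_def)

lemma poch_bound: "i \<le> r - 1 \<Longrightarrow> pochhammer (real LL + 1) i \<le> real k ^ i"
proof -
  assume i: "i \<le> r - 1"
  have "pochhammer (real LL + 1) i = (\<Prod>l<i. real LL + 1 + real l)" by (simp add: pochhammer_prod atLeast0LessThan)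
  also have "\<dots> \<le> (\<Prod>l<i. real k)"
  proof (intro prod_mono conjI)
    fix l assume "l \<in> {..<i}"
    then have "LL + 1 + l \<le> k" using i LL_facts by auto
    then show "real LL + 1 + real l \<le> real k" by linarith
  qed auto
  finally show ?thesis by simp
qed

lemma ahat_bound:
  assumes g: "good0 u n" and S: "S \<le> TT u n" and i: "i \<le> r - 1"
  shows "\<bar>ahat n i S\<bar> \<le> (KA - 1) * xx u n ^ i"
proof -
  note xf = x_facts[OF g]
  have ik: "i \<le> k" using i rk by simp
  have "\<bar>ahat n i S\<bar> = \<bar>cc\<bar> * pochhammer (real LL + 1) i * real (S choose i) / real n ^ i"
    unfolding ahat_def by (simp add: abs_mult pochhammer_nonneg)
  also have "\<dots> \<le> \<bar>cc\<bar> * real k ^ k * (real S / real n) ^ i"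
  proof -
    have b1: "real (S choose i) \<le> real S ^ i"
    proof (cases "i \<le> S")
      case True then show ?thesis using binomial_le_pow[OF True] by (metis of_nat_le_iff of_nat_power)
    next
      case False then show ?thesis by (simp add: binomial_eq_0)
    qed
    have p1: "pochhammer (real LL + 1) i \<le> real k ^ k"
    proof -
      have "real k ^ i \<le> real k ^ k" using LL_facts(4) ik by (intro power_increasing) auto
      then show ?thesis using poch_bound[OF i] by linarith
    qed
    have "\<bar>cc\<bar> * pochhammer (real LL + 1) i * real (S choose i) \<le> \<bar>cc\<bar> * real k ^ k * real S ^ i"
      using b1 p1 by (intro mult_mono) (auto simp: pochhammer_nonneg)
    then show ?thesis using xf by (simp add: divide_right_mono power_divide)
  qed
  also have "\<dots> \<le> \<bar>cc\<bar> * real k ^ k * (tau * xx u n) ^ i"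
    using xf(5)[OF S] by (intro mult_left_mono power_mono) auto
  also have "\<dots> \<le> \<bar>cc\<bar> * real k ^ k * ((1 + tau) ^ k * xx u n ^ i)"
  proof -
    have "tau ^ i \<le> (1 + tau) ^ i" using tau by (intro power_mono) auto
    also have "\<dots> \<le> (1 + tau) ^ k" using tau ik by (intro power_increasing) auto
    finally have "tau ^ i * xx u n ^ i \<le> (1 + tau) ^ k * xx u n ^ i" using xf by (intro mult_right_mono) auto
    then show ?thesis by (intro mult_left_mono) (auto simp: power_mult_distrib)
  qed
  also have "\<dots> = (KA - 1) * xx u n ^ i" unfolding KA_def by simp
  finally show ?thesis .
qed

lemma good1_facts:
  assumes g: "good1 u n"
  shows "good0 u n" "Mbig * tau * xx u n \<le> 1" "KA * xx u n \<le> 1/2" "(real LL * Cb * tau + KA) * xx u n \<le> 1"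
    "16 * real k * KA / real n \<le> 1" "4 * real k * E1 / real n \<le> 1"
proof -
  show g0: "good0 u n" using g unfolding good1_def by simp
  note xf = x_facts[OF g0]
  show "Mbig * tau * xx u n \<le> 1" using g xf unfolding good1_def xx_def by (simp add: divide_simps)
  show "KA * xx u n \<le> 1/2" using g xf unfolding good1_def xx_def by (simp add: divide_simps)
  show "(real LL * Cb * tau + KA) * xx u n \<le> 1" using g xf unfolding good1_def xx_def by (simp add: divide_simps)
  show "16 * real k * KA / real n \<le> 1" using g xf unfolding good1_def by (simp add: divide_simps)
  show "4 * real k * E1 / real n \<le> 1" using g xf unfolding good1_def by (simp add: divide_simps)
qed

lemma tri3: fixes a b c d :: real shows "\<bar>a - d\<bar> \<le> \<bar>a - b\<bar> + \<bar>b - c\<bar> + \<bar>c - d\<bar>"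
  using abs_triangle_ineq[of "a-b" "b-d"] abs_triangle_ineq[of "b-c" "c-d"] by simp
lemma tri2: fixes a b c :: real shows "\<bar>a - c\<bar> \<le> \<bar>a - b\<bar> + \<bar>b - c\<bar>"
  using abs_triangle_ineq[of "a-b" "b-c"] by simp

lemma tri4: fixes a b c d e :: real shows "\<bar>a - e\<bar> \<le> \<bar>a - b\<bar> + \<bar>b - c\<bar> + \<bar>c - d\<bar> + \<bar>d - e\<bar>"
  using tri3[where a=a and b=b and c=c and d=e] tri2[where a=c and b=d and c=e] by simp

lemma gam_eq: "0 \<le> s \<Longrightarrow> s \<le> 1 \<Longrightarrow> gam s d = 1 + s * (exp d - 1)"
  unfolding gam_def clamp_def by (simp add: algebra_simps)

lemma lev1:
  assumes g: "good1 u n"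
  shows "S \<le> TT u n \<Longrightarrow> \<bar>aa u n S (LL+1) - ahat n 1 S\<bar> \<le> Mf 0 * xx u n * real S / real n"
proof (induction S)
  case 0
  then show ?case by (simp add: aa_def ahat_def)
next
  case (Suc S)
  note gf = good1_facts[OF g]
  note g0 = gf(1)
  note xf = x_facts[OF g0]
  define x where "x = xx u n"
  define t where "t = TT u n - Suc S"
  define j where "j = LL + 1"
  define s where "s = real j / NN u n t"
  define b where "b = bb u n S"
  define a where "a = aa u n S j"
  define dd where "dd = real LL * b - a"
  define z where "z = s * (exp dd - 1)"
  have SL: "S \<le> TT u n" using Suc by simp
  have tT: "t \<le> TT u n" unfolding t_def by simp
  have jk: "j \<le> k" unfolding j_def using LL_facts by linarith
  have n0: "0 < real n" using xf by simp
  have x0: "0 < x" "x \<le> 1" "1 / real n \<le> x" using xf unfolding x_def by auto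
  note sb = ss_bounds[OF g0 tT jk, folded s_def]
  have sc: "\<bar>s - real j / real n\<bar> \<le> 2 * real k * (1 + tau) * x / real n"
    using ss_close[OF g0 tT jk] unfolding s_def x_def .
  have IH: "\<bar>a - ahat n 1 S\<bar> \<le> M1 * x * real S / real n" using Suc SL unfolding a_def j_def x_def by simp
  have Sx: "real S / real n \<le> tau * x" using xf(5)[OF SL] unfolding x_def .
  have M1t: "M1 * tau * x \<le> 1"
  proof -
    have "M1 \<le> Mbig" using Mf_le_Mbig[of 0] LL_facts by simp
    then have "M1 * tau * x \<le> Mbig * tau * x" using tau x0 by (intro mult_right_mono) auto
    then show ?thesis using gf(2) unfolding x_def by linarith
  qed
  have "M1 * x * real S / real n = M1 * x * (real S / real n)" by simp
  also have "\<dots> \<le> M1 * x * (tau * x)" using Sx M1_nonneg x0 by (intro mult_left_mono) auto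
  also have "\<dots> = (M1 * tau * x) * x" by simp
  also have "\<dots> \<le> 1 * x" using M1t x0 by (intro mult_right_mono) auto
  finally have e1: "M1 * x * real S / real n \<le> x" by simp
  have ab: "\<bar>ahat n 1 S\<bar> \<le> (KA - 1) * x" using ahat_bound[OF g0 SL, of 1] r2 unfolding x_def by simp
  have abnd: "\<bar>a\<bar> \<le> KA * x" using IH e1 ab by (simp add: algebra_simps)
  have bbd: "\<bar>b - lam\<bar> \<le> Cb * tau * x"
  proof -
    have "\<bar>b - lam\<bar> \<le> Cb * real S / real n" using bb_bound[OF g0 SL] unfolding b_def .
    also have "\<dots> = Cb * (real S / real n)" by simp
    also have "\<dots> \<le> Cb * (tau * x)" using Sx Cb_pos by (intro mult_left_mono) auto
    finally show ?thesis by simp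
  qed
  have ddb: "\<bar>dd - real LL * lam\<bar> \<le> (real LL * Cb * tau + KA) * x"
  proof -
    have e: "dd - real LL * lam = real LL * (b - lam) - a" unfolding dd_def by (simp add: algebra_simps)
    have "\<bar>dd - real LL * lam\<bar> \<le> \<bar>real LL * (b - lam)\<bar> + \<bar>a\<bar>" unfolding e by (rule abs_triangle_ineq4)
    then have "\<bar>dd - real LL * lam\<bar> \<le> real LL * \<bar>b - lam\<bar> + \<bar>a\<bar>" by (simp add: abs_mult)
    also have "\<dots> \<le> real LL * (Cb * tau * x) + KA * x" using bbd abnd by (intro add_mono mult_left_mono) auto
    finally show ?thesis by (simp add: algebra_simps)
  qed
  have dd1: "\<bar>dd - real LL * lam\<bar> \<le> 1" using ddb gf(4) unfolding x_def by linarith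
  have expd: "\<bar>exp dd - 1\<bar> \<le> E1"
  proof -
    have "dd \<le> real LL * \<bar>lam\<bar> + 1" using dd1 by (smt (verit) abs_mult abs_of_nat abs_ge_self mult_left_mono of_nat_0_le_iff)
    then have "exp dd \<le> exp (real LL * \<bar>lam\<bar> + 1)" by simp
    then show ?thesis unfolding E1_def using exp_gt_zero[of dd] by linarith
  qed
  have zb: "\<bar>z\<bar> \<le> 2 * real k * E1 / real n"
  proof -
    have "\<bar>z\<bar> = s * \<bar>exp dd - 1\<bar>" unfolding z_def using sb by (simp add: abs_mult)
    also have "\<dots> \<le> (2 * real k / real n) * E1" using sb expd by (intro mult_mono) auto
    finally show ?thesis by simp
  qed
  have zh: "\<bar>z\<bar> \<le> 1/2"
  proof -
    have "2 * real k * E1 / real n = (4 * real k * E1 / real n) / 2" by simp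
    then show ?thesis using zb gf(6) by linarith
  qed
  have f: "\<bar>ln (1 + z) - z\<bar> \<le> 8 * (real k)\<^sup>2 * E1\<^sup>2 * x / real n"
  proof -
    have "\<bar>ln (1 + z) - z\<bar> \<le> 2 * z\<^sup>2" by (rule abs_ln_one_plus_x_minus_x_bound[OF zh])
    also have "\<dots> \<le> 2 * (2 * real k * E1 / real n)\<^sup>2"
    proof -
      have "\<bar>z\<bar>\<^sup>2 \<le> (2 * real k * E1 / real n)\<^sup>2" by (rule power_mono[OF zb]) simp
      then show ?thesis by simp
    qed
    also have "\<dots> = 8 * (real k)\<^sup>2 * E1\<^sup>2 * (1 / real n) / real n" by (simp add: power2_eq_square field_simps)
    also have "\<dots> \<le> 8 * (real k)\<^sup>2 * E1\<^sup>2 * x / real n"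
      using x0 n0 by (intro divide_right_mono mult_left_mono) auto
    finally show ?thesis .
  qed
  have gg: "\<bar>z - s * cc\<bar> \<le> 4 * real k * exp (real LL * \<bar>lam\<bar>) * (real LL * Cb * tau + KA) * x / real n"
  proof -
    have "z - s * cc = s * (exp dd - exp (real LL * lam))" unfolding z_def cc_def by (simp add: algebra_simps)
    then have "\<bar>z - s * cc\<bar> = s * \<bar>exp dd - exp (real LL * lam)\<bar>" using sb by (simp add: abs_mult)
    also have "\<dots> \<le> (2 * real k / real n) * (2 * exp (real LL * lam) * \<bar>dd - real LL * lam\<bar>)"
      using sb exp_lip[OF dd1] by (intro mult_mono) auto
    also have "\<dots> \<le> (2 * real k / real n) * (2 * exp (real LL * \<bar>lam\<bar>) * ((real LL * Cb * tau + KA) * x))"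
    proof -
      have "exp (real LL * lam) \<le> exp (real LL * \<bar>lam\<bar>)" by (simp add: mult_left_mono)
      then show ?thesis using ddb n0 by (intro mult_left_mono mult_mono) auto
    qed
    finally show ?thesis by (simp add: field_simps)
  qed
  have hh: "\<bar>s * cc - (real LL + 1) / real n * cc\<bar> \<le> 2 * real k * (1 + tau) * \<bar>cc\<bar> * x / real n"
  proof -
    have "\<bar>s * cc - (real LL + 1) / real n * cc\<bar> = \<bar>s - real j / real n\<bar> * \<bar>cc\<bar>"
      unfolding j_def by (simp add: abs_mult[symmetric] algebra_simps)
    also have "\<dots> \<le> 2 * real k * (1 + tau) * x / real n * \<bar>cc\<bar>" using sc by (intro mult_right_mono) auto
    also have "\<dots> = 2 * real k * (1 + tau) * \<bar>cc\<bar> * x / real n" by simp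
    finally show ?thesis .
  qed
  have step: "\<bar>ln (1 + z) - (real LL + 1) / real n * cc\<bar> \<le> M1 * x / real n"
  proof -
    have "\<bar>ln (1 + z) - (real LL + 1) / real n * cc\<bar> \<le> \<bar>ln (1 + z) - z\<bar> + \<bar>z - s * cc\<bar> + \<bar>s * cc - (real LL + 1) / real n * cc\<bar>"
      by (rule tri3)
    also have "\<dots> \<le> 8 * (real k)\<^sup>2 * E1\<^sup>2 * x / real n + 4 * real k * exp (real LL * \<bar>lam\<bar>) * (real LL * Cb * tau + KA) * x / real n
        + 2 * real k * (1 + tau) * \<bar>cc\<bar> * x / real n"
      using f gg hh by linarith
    also have "\<dots> = M1 * x / real n" unfolding M1_def using n0 by (simp add: field_simps)
    finally show ?thesis .
  qed
  have aS: "aa u n (Suc S) j = a + ln (1 + z)"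
  proof -
    have "dl k r (bb u n S) (aa u n S) j = dd" unfolding dl_def dd_def a_def b_def j_def using LL_facts
      by (simp add: LL_def)
    then have "aa u n (Suc S) j = a + ln (gam s dd)" unfolding aa_Suc a_def s_def t_def by simp
    moreover have "s \<le> 1" using sb by linarith
    then have "gam s dd = 1 + z" using sb gam_eq unfolding z_def by simp
    ultimately show ?thesis by simp
  qed
  have hS: "ahat n 1 (Suc S) = ahat n 1 S + (real LL + 1) / real n * cc"
    using ahat_rec[of n 0 S] by (simp add: ahat_0)
  have "\<bar>aa u n (Suc S) (LL + 1) - ahat n 1 (Suc S)\<bar> \<le> \<bar>a - ahat n 1 S\<bar> + \<bar>ln (1 + z) - (real LL + 1) / real n * cc\<bar>"
    using aS hS unfolding j_def by linarith
  also have "\<dots> \<le> M1 * x * real S / real n + M1 * x / real n" using IH step by linarith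
  also have "\<dots> = Mf 0 * xx u n * real (Suc S) / real n" unfolding x_def by (simp add: add_divide_distrib algebra_simps)
  finally show ?case .
qed

lemma levS:
  assumes g: "good1 u n" and p: "Suc (Suc p) \<le> r - 1"
    and prev: "\<And>S. S \<le> TT u n \<Longrightarrow> \<bar>aa u n S (LL + Suc p) - ahat n (Suc p) S\<bar> \<le> Mf p * xx u n ^ Suc p * real S / real n"
  shows "S \<le> TT u n \<Longrightarrow> \<bar>aa u n S (LL + Suc (Suc p)) - ahat n (Suc (Suc p)) S\<bar> \<le> Mf (Suc p) * xx u n ^ Suc (Suc p) * real S / real n"
proof (induction S)
  case 0
  then show ?case by (simp add: aa_def ahat_def)
next
  case (Suc S)
  note gf = good1_facts[OF g]
  note g0 = gf(1)
  note xf = x_facts[OF g0]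
  define i where "i = Suc p"
  define x where "x = xx u n"
  define t where "t = TT u n - Suc S"
  define j where "j = LL + Suc i"
  define s where "s = real j / NN u n t"
  define ap where "ap = aa u n S (LL + i)"
  define a where "a = aa u n S j"
  define A where "A = ahat n i S"
  define dd where "dd = ap - a"
  define z where "z = s * (exp dd - 1)"
  have SL: "S \<le> TT u n" using Suc by simp
  have tT: "t \<le> TT u n" unfolding t_def by simp
  have jk: "j \<le> k" unfolding j_def i_def using LL_facts p by linarith
  have n0: "0 < real n" using xf by simp
  have x0: "0 < x" "x \<le> 1" "1 / real n \<le> x" using xf unfolding x_def by auto
  note sb = ss_bounds[OF g0 tT jk, folded s_def]
  have sc: "\<bar>s - real j / real n\<bar> \<le> 2 * real k * (1 + tau) * x / real n"
    using ss_close[OF g0 tT jk] unfolding s_def x_def .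
  have Sx: "real S / real n \<le> tau * x" using xf(5)[OF SL] unfolding x_def .
  have xpow: "x ^ m \<le> x ^ l" if "l \<le> m" for l m using x0 that by (intro power_decreasing) auto
  have xpos: "0 \<le> x ^ m" for m using x0 by simp
  have Mb: "Mf q * tau * x \<le> 1" if "q < k" for q
  proof -
    have "Mf q * tau * x \<le> Mbig * tau * x" using Mf_le_Mbig[OF that] tau x0 by (intro mult_right_mono) auto
    then show ?thesis using gf(2) unfolding x_def by linarith
  qed
  have errb: "M * x ^ e * real S / real n \<le> M * tau * x ^ Suc e" if "0 \<le> M" for M e
  proof -
    have "M * x ^ e * real S / real n = M * x ^ e * (real S / real n)" by simp
    also have "\<dots> \<le> M * x ^ e * (tau * x)" using Sx that xpos by (intro mult_left_mono) auto
    finally show ?thesis by (simp add: mult_ac)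
  qed
  have small: "M * tau * x ^ Suc e \<le> x ^ e" if "M * tau * x \<le> 1" "0 \<le> M" for M e
  proof -
    have "M * tau * x ^ Suc e = (M * tau * x) * x ^ e" by (simp add: mult_ac)
    also have "\<dots> \<le> 1 * x ^ e" using that xpos by (intro mult_right_mono) auto
    finally show ?thesis by simp
  qed
  have pk: "p < k" "Suc p < k" using p LL_facts by linarith+
  have Ep: "\<bar>ap - A\<bar> \<le> Mf p * tau * x ^ Suc i"
    using prev[OF SL] errb[OF Mf_nonneg] unfolding ap_def A_def x_def i_def by (meson order_trans)
  have Ab: "\<bar>A\<bar> \<le> (KA - 1) * x ^ i" using ahat_bound[OF g0 SL, of i] p unfolding A_def x_def i_def by simp
  have apb: "\<bar>ap\<bar> \<le> KA * x ^ i"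
    using Ep Ab small[OF Mb[OF pk(1)] Mf_nonneg, of i] by (simp add: algebra_simps)
  have IH: "\<bar>a - ahat n (Suc i) S\<bar> \<le> Mf i * x ^ Suc i * real S / real n"
    using Suc SL unfolding a_def j_def x_def i_def by simp
  have Ea: "\<bar>a - ahat n (Suc i) S\<bar> \<le> x ^ Suc i"
    using IH errb[OF Mf_nonneg, of i "Suc i"] small[OF Mb[OF pk(2)] Mf_nonneg, of "Suc i"] unfolding i_def by linarith
  have Ab2: "\<bar>ahat n (Suc i) S\<bar> \<le> (KA - 1) * x ^ Suc i" using ahat_bound[OF g0 SL, of "Suc i"] p unfolding x_def i_def by simp
  have ab: "\<bar>a\<bar> \<le> KA * x ^ Suc i" using Ea Ab2 by (simp add: algebra_simps)
  have ab': "\<bar>a\<bar> \<le> KA * x ^ i" using ab xpow[of i "Suc i"] KA_ge1 by (meson le_SucI order_refl order_trans mult_left_mono less_imp_le less_le_trans zero_less_one)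
  have ddb: "\<bar>dd\<bar> \<le> 2 * KA * x ^ i" unfolding dd_def using apb ab' by linarith
  have dd1: "\<bar>dd\<bar> \<le> 1"
  proof -
    have "x ^ i \<le> x" using xpow[of 1 i] unfolding i_def by simp
    then have "2 * KA * x ^ i \<le> 2 * KA * x" using KA_ge1 by simp
    then show ?thesis using ddb gf(3) unfolding x_def by linarith
  qed
  have ed: "\<bar>exp dd - 1\<bar> \<le> 4 * KA * x ^ i" using exp_lin[OF dd1] ddb by linarith
  have zb: "\<bar>z\<bar> \<le> 8 * real k * KA * x ^ i / real n"
  proof -
    have "\<bar>z\<bar> = s * \<bar>exp dd - 1\<bar>" unfolding z_def using sb by (simp add: abs_mult)
    also have "\<dots> \<le> (2 * real k / real n) * (4 * KA * x ^ i)" using sb ed by (intro mult_mono) auto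
    finally show ?thesis by simp
  qed
  have zh: "\<bar>z\<bar> \<le> 1/2"
  proof -
    have "x ^ i \<le> 1" using x0 by (simp add: power_le_one)
    then have "8 * real k * KA * x ^ i / real n \<le> 8 * real k * KA / real n"
      using KA_ge1 n0 by (intro divide_right_mono) (auto simp: mult_left_le)
    also have "\<dots> = (16 * real k * KA / real n) / 2" by simp
    also have "\<dots> \<le> 1 / 2" using gf(5) by (simp only: divide_right_mono)
    finally show ?thesis using zb by linarith
  qed
  have fb: "\<bar>ln (1 + z) - z\<bar> \<le> 128 * (real k)\<^sup>2 * KA\<^sup>2 * x ^ Suc i / real n"
  proof -
    have "\<bar>ln (1 + z) - z\<bar> \<le> 2 * z\<^sup>2" by (rule abs_ln_one_plus_x_minus_x_bound[OF zh])
    also have "\<dots> \<le> 2 * (8 * real k * KA * x ^ i / real n)\<^sup>2"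
    proof -
      have "\<bar>z\<bar>\<^sup>2 \<le> (8 * real k * KA * x ^ i / real n)\<^sup>2" by (rule power_mono[OF zb]) simp
      then show ?thesis by simp
    qed
    also have "\<dots> = 128 * (real k)\<^sup>2 * KA\<^sup>2 * (x ^ (2 * i) * (1 / real n)) / real n"
    proof -
      have "x ^ (2 * i) = x ^ i * x ^ i" by (simp add: mult_2 power_add)
      then show ?thesis using n0 by (simp add: power2_eq_square field_simps)
    qed
    also have "\<dots> \<le> 128 * (real k)\<^sup>2 * KA\<^sup>2 * x ^ Suc i / real n"
    proof -
      have "x ^ (2 * i) * (1 / real n) \<le> x ^ (2 * i) * x" using x0 xpos by (intro mult_left_mono) auto
      also have "\<dots> = x ^ Suc (2 * i)" by simp
      also have "\<dots> \<le> x ^ Suc i" by (rule xpow) simp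
      finally show ?thesis using n0 by (intro divide_right_mono mult_left_mono) auto
    qed
    finally show ?thesis .
  qed
  have gb: "\<bar>z - s * dd\<bar> \<le> 8 * real k * KA\<^sup>2 * x ^ Suc i / real n"
  proof -
    have "z - s * dd = s * (exp dd - 1 - dd)" unfolding z_def by (simp add: algebra_simps)
    then have "\<bar>z - s * dd\<bar> = s * \<bar>exp dd - 1 - dd\<bar>" using sb by (simp add: abs_mult)
    also have "\<dots> \<le> (2 * real k / real n) * (2 * KA * x ^ i)\<^sup>2"
    proof -
      have "\<bar>dd\<bar>\<^sup>2 \<le> (2 * KA * x ^ i)\<^sup>2" by (rule power_mono[OF ddb]) simp
      then show ?thesis using sb exp_quad_abs[OF dd1] by (intro mult_mono) auto
    qed
    also have "\<dots> = 8 * real k * KA\<^sup>2 * x ^ (2 * i) / real n"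
    proof -
      have "x ^ (2 * i) = x ^ i * x ^ i" by (simp add: mult_2 power_add)
      then show ?thesis using n0 by (simp add: power2_eq_square field_simps)
    qed
    also have "\<dots> \<le> 8 * real k * KA\<^sup>2 * x ^ Suc i / real n"
      using xpow[of "Suc i" "2 * i"] n0 unfolding i_def by (intro divide_right_mono mult_left_mono) auto
    finally show ?thesis .
  qed
  have hb: "\<bar>s * dd - s * A\<bar> \<le> 2 * real k * (Mf p * tau + KA) * x ^ Suc i / real n"
  proof -
    have "\<bar>dd - A\<bar> \<le> \<bar>ap - A\<bar> + \<bar>a\<bar>" unfolding dd_def by linarith
    also have "\<dots> \<le> Mf p * tau * x ^ Suc i + KA * x ^ Suc i" using Ep ab by linarith
    finally have dA: "\<bar>dd - A\<bar> \<le> (Mf p * tau + KA) * x ^ Suc i" by (simp add: algebra_simps)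
    have "s * dd - s * A = s * (dd - A)" by (simp add: algebra_simps)
    then have "\<bar>s * dd - s * A\<bar> = s * \<bar>dd - A\<bar>" using sb by (simp add: abs_mult)
    also have "\<dots> \<le> (2 * real k / real n) * ((Mf p * tau + KA) * x ^ Suc i)" using sb dA by (intro mult_mono) auto
    finally show ?thesis by simp
  qed
  have wb: "\<bar>s * A - real j / real n * A\<bar> \<le> 2 * real k * (1 + tau) * KA * x ^ Suc i / real n"
  proof -
    have "\<bar>s * A - real j / real n * A\<bar> = \<bar>s - real j / real n\<bar> * \<bar>A\<bar>"
      by (simp add: abs_mult[symmetric] left_diff_distrib)
    also have "\<dots> \<le> (2 * real k * (1 + tau) * x / real n) * (KA * x ^ i)"
      using sc Ab xpos[of i] by (intro mult_mono) (auto simp: algebra_simps)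
    also have "\<dots> = 2 * real k * (1 + tau) * KA * x ^ Suc i / real n" by (simp add: mult_ac)
    finally show ?thesis .
  qed
  have step: "\<bar>ln (1 + z) - real j / real n * A\<bar> \<le> Mf (Suc p) * x ^ Suc i / real n"
  proof -
    have "\<bar>ln (1 + z) - real j / real n * A\<bar> \<le> \<bar>ln (1 + z) - z\<bar> + \<bar>z - s * dd\<bar> + \<bar>s * dd - s * A\<bar> + \<bar>s * A - real j / real n * A\<bar>"
      by (rule tri4)
    also have "\<dots> \<le> 128 * (real k)\<^sup>2 * KA\<^sup>2 * x ^ Suc i / real n + 8 * real k * KA\<^sup>2 * x ^ Suc i / real n
       + 2 * real k * (Mf p * tau + KA) * x ^ Suc i / real n + 2 * real k * (1 + tau) * KA * x ^ Suc i / real n"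
      using fb gb hb wb by linarith
    also have "\<dots> = Mf (Suc p) * x ^ Suc i / real n" unfolding Mf.simps D0_def using n0 by (simp add: field_simps)
    finally show ?thesis .
  qed
  have aS: "aa u n (Suc S) j = a + ln (1 + z)"
  proof -
    have "j \<noteq> k - r + 2" "j - 1 = LL + i" unfolding j_def i_def using LL_facts by auto
    then have "dl k r (bb u n S) (aa u n S) j = dd" unfolding dl_def dd_def a_def ap_def by simp
    then have "aa u n (Suc S) j = a + ln (gam s dd)" unfolding aa_Suc a_def s_def t_def by simp
    moreover have "s \<le> 1" using sb by linarith
    then have "gam s dd = 1 + z" using sb gam_eq unfolding z_def by simp
    ultimately show ?thesis by simp
  qed
  have hS: "ahat n (Suc i) (Suc S) = ahat n (Suc i) S + real j / real n * A"
    using ahat_rec[of n i S] unfolding j_def A_def by simp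
  have "\<bar>aa u n (Suc S) j - ahat n (Suc i) (Suc S)\<bar> \<le> \<bar>a - ahat n (Suc i) S\<bar> + \<bar>ln (1 + z) - real j / real n * A\<bar>"
    using aS hS by linarith
  also have "\<dots> \<le> Mf i * x ^ Suc i * real S / real n + Mf (Suc p) * x ^ Suc i / real n" using IH step by linarith
  also have "\<dots> = Mf (Suc p) * x ^ Suc i * real (Suc S) / real n" unfolding i_def by (simp add: add_divide_distrib algebra_simps)
  finally show ?case unfolding j_def x_def i_def .
qed

end




lemma prod_bounds:
  fixes c :: "nat \<Rightarrow> real"
  assumes N: "0 \<le> N" and d: "0 \<le> \<delta>" "\<delta> \<le> 1" and c: "\<And>l. l < j \<Longrightarrow> N * (1 - \<delta>) \<le> c l \<and> c l \<le> N"
  shows "N ^ j * (1 - real j * \<delta>) \<le> (\<Prod>l<j. c l)" "(\<Prod>l<j. c l) \<le> N ^ j"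
proof -
  have c0: "0 \<le> N * (1 - \<delta>)" using N d by simp
  have "(\<Prod>l<j. c l) \<le> (\<Prod>l<j. N)"
    using c c0 by (intro prod_mono) (auto intro: order_trans)
  then show "(\<Prod>l<j. c l) \<le> N ^ j" by simp
  have "(\<Prod>l<j. N * (1 - \<delta>)) \<le> (\<Prod>l<j. c l)"
    using c c0 by (intro prod_mono) auto
  moreover have "(\<Prod>l<j. N * (1 - \<delta>)) = N ^ j * (1 - \<delta>) ^ j" by (simp add: power_mult_distrib)
  moreover have "1 - real j * \<delta> \<le> (1 - \<delta>) ^ j"
    using Bernoulli_inequality[of "- \<delta>" j] d by simp
  then have "N ^ j * (1 - real j * \<delta>) \<le> N ^ j * (1 - \<delta>) ^ j" using N by (intro mult_left_mono) auto
  ultimately show "N ^ j * (1 - real j * \<delta>) \<le> (\<Prod>l<j. c l)" by linarith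
qed

lemma binom_prod: "real (N choose j) = (\<Prod>l<j. real N - real l) / fact j"
  by (simp add: binomial_gbinomial gbinomial_prod_rev atLeast0LessThan)

lemma poch_fact: "pochhammer (real L + 1) i * fact L = (fact (L + i) :: real)"
proof (induction i)
  case (Suc i)
  have "pochhammer (real L + 1) (Suc i) * fact L = (pochhammer (real L + 1) i * fact L) * (real L + 1 + real i)"
    by (simp add: pochhammer_Suc mult_ac)
  also have "\<dots> = fact (L + i) * (real (Suc (L + i)))" using Suc by simp
  also have "\<dots> = fact (L + Suc i)" by (simp add: fact_Suc mult.commute)
  finally show ?case .
qed simp


lemma ratio_est:
  fixes N D Z G eN eD :: real
  assumes Z: "0 < Z" and G: "0 < G" and N1: "Z * (1 - eN) \<le> N" and N2: "N \<le> Z" and D1: "G * (1 - eD) \<le> D" and D2: "D \<le> G"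
    and e: "0 \<le> eN" "eN \<le> 1" "0 \<le> eD" "eD \<le> 1/2"
  shows "\<bar>N / D - Z / G\<bar> \<le> Z / G * (eN + 2 * eD)"
proof -
  have G1: "0 < G * (1 - eD)" using G e by simp
  have D0: "0 < D" using G1 D1 by linarith
  have up: "N / D \<le> Z / G * (1 + 2 * eD)"
  proof -
    have "N / D \<le> Z / D" using N2 D0 by (simp add: divide_right_mono)
    also have "\<dots> \<le> Z / (G * (1 - eD))" using Z G1 D1 by (intro divide_left_mono) auto
    also have "\<dots> \<le> Z / G * (1 + 2 * eD)"
    proof -
      have "1 \<le> (1 - eD) * (1 + 2 * eD)"
      proof -
        have "(1 - eD) * (1 + 2 * eD) = 1 + eD * (1 - 2 * eD)" by (simp add: algebra_simps)
        moreover have "0 \<le> eD * (1 - 2 * eD)" using e by simp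
        ultimately show ?thesis by linarith
      qed
      moreover have "0 < 1 - eD" using e by simp
      ultimately have "1 / (1 - eD) \<le> 1 + 2 * eD" by (simp add: divide_simps mult.commute)
      then have "Z / G * (1 / (1 - eD)) \<le> Z / G * (1 + 2 * eD)" using Z G by (intro mult_left_mono) auto
      then show ?thesis by simp
    qed
    finally show ?thesis .
  qed
  have lo: "Z / G * (1 - eN) \<le> N / D"
  proof -
    have a0: "0 \<le> Z * (1 - eN)" using Z e by simp
    have "Z * (1 - eN) / G \<le> Z * (1 - eN) / D" using a0 D0 D2 by (intro divide_left_mono) auto
    also have "\<dots> \<le> N / D" using N1 D0 by (simp add: divide_right_mono)
    finally show ?thesis by simp
  qed
  have "N / D - Z / G \<le> Z / G * (2 * eD)" using up by (simp add: algebra_simps)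
  moreover have "Z / G - N / D \<le> Z / G * eN"
  proof -
    have "Z / G * (1 - eN) = Z / G - Z / G * eN" by (simp add: right_diff_distrib)
    then show ?thesis using lo by linarith
  qed
  moreover have "0 \<le> Z / G * eN" "0 \<le> Z / G * (2 * eD)" using Z G e by auto
  ultimately show ?thesis by (simp add: abs_le_iff algebra_simps)
qed

lemma alg_Q:
  fixes m A1 A2 A3 A4 f1 f2 fk fL fi N :: real
  assumes "f1 \<noteq> 0" "f2 \<noteq> 0" "fk \<noteq> 0" "fL \<noteq> 0" "fi \<noteq> 0" "A3 \<noteq> 0" "N \<noteq> 0"
  shows "m * ((A1 / f1) * (A2 / f2) / (A3 / fk)) * (f1 / fL) * (A4 / fi) / N = (m * A1 * A2 * A4) / (A3 * N) * (fk / (fL * fi * f2))"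
  using assms by (simp add: field_simps)

lemma mult4_mono:
  fixes a b c d a' b' c' d' :: real
  assumes "0 \<le> a'" "a' \<le> a" "0 \<le> b'" "b' \<le> b" "0 \<le> c'" "c' \<le> c" "0 \<le> d'" "d' \<le> d"
  shows "a' * b' * c' * d' \<le> a * b * c * d"
proof -
  have "a' * b' \<le> a * b" using assms by (intro mult_mono) auto
  moreover have "a' * b' * c' \<le> a * b * c" using assms calculation by (intro mult_mono) auto
  ultimately show ?thesis using assms by (intro mult_mono) auto
qed

lemma prod4_lower:
  fixes a b c d :: real
  assumes "0 \<le> a" "a \<le> 1" "0 \<le> b" "b \<le> 1" "0 \<le> c" "c \<le> 1" "0 \<le> d" "d \<le> 1"
  shows "1 - (a + b + c + d) \<le> (1 - a) * (1 - b) * (1 - c) * (1 - d)"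
proof -
  have "1 - (a + b) \<le> (1 - a) * (1 - b)" using assms by (simp add: algebra_simps)
  moreover have "1 - (a + b + c) \<le> (1 - (a + b)) * (1 - c)" using assms by (simp add: algebra_simps)
  moreover have "1 - (a + b + c + d) \<le> (1 - (a + b + c)) * (1 - d)" using assms by (simp add: algebra_simps)
  moreover have "(1 - (a + b)) * (1 - c) \<le> (1 - a) * (1 - b) * (1 - c)" using calculation(1) assms by (intro mult_right_mono) auto
  moreover have "(1 - (a + b + c)) * (1 - d) \<le> (1 - a) * (1 - b) * (1 - c) * (1 - d)"
    using calculation(2,4) assms by (intro mult_right_mono) auto
  ultimately show ?thesis by linarith
qed

context Sett begin

definition mm :: "(nat \<Rightarrow> nat) \<Rightarrow> nat \<Rightarrow> nat" where
  "mm u n = nat \<lfloor>mu * real n ^ (r - 1) / real (u n) ^ (r - 2)\<rfloor>"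
definition WW :: "nat \<Rightarrow> real" where "WW i = real (k choose (r - 1)) * real ((r - 1) choose i)"
definition good2 :: "(nat \<Rightarrow> nat) \<Rightarrow> nat \<Rightarrow> bool" where
  "good2 u n \<longleftrightarrow> good1 u n \<and> 4 * real k * (real (u n) + real k) \<le> real n \<and> 4 * (real k)\<^sup>2 \<le> real (u n)
     \<and> 4 * real k * (real k + 1) \<le> tau * real (u n) \<and> 2 * (real k)\<^sup>2 \<le> real n \<and> 4 \<le> mu * real n"
definition epsQ :: "(nat \<Rightarrow> nat) \<Rightarrow> nat \<Rightarrow> real" where
  "epsQ u n = 1 / (mu * real n) + real k * (real (u n) + real k) / real n + (real k)\<^sup>2 / real (u n)
     + real k * (real k + 1) / (tau * real (u n)) + 2 * (real k)\<^sup>2 / real n"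

lemma WW_fact: "i \<le> r - 1 \<Longrightarrow> WW i = fact k / (fact LL * fact i * fact (r - 1 - i))"
proof -
  assume i: "i \<le> r - 1"
  have "r - 1 \<le> k" using rk by simp
  then have "WW i = fact k / (fact (r - 1) * fact (k - (r - 1))) * (fact (r - 1) / (fact i * fact (r - 1 - i)))"
    unfolding WW_def using i by (simp add: binomial_fact)
  moreover have "k - (r - 1) = LL" using LL_facts by simp
  ultimately show ?thesis by (simp add: field_simps)
qed

lemma Q_est:
  assumes g: "good2 u n" and i: "i \<le> r - 1"
  shows "\<bar>real (mm u n) * pj k u n (LL + i) * pochhammer (real LL + 1) i * real (TT u n choose i) / real n ^ i
     - mu * tau ^ i * real (u n) * WW i\<bar> \<le> mu * tau ^ i * real (u n) * WW i * epsQ u n"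
proof -
  have g1: "good1 u n" using g unfolding good2_def by simp
  note gf = good1_facts[OF g1]
  note g0 = gf(1)
  note xf = x_facts[OF g0]
  define d' where "d' = r - 2"
  have d': "r - 1 = Suc d'" unfolding d'_def using r2 by simp
  have r2': "r - 2 = d'" using d' by simp
  define U where "U = real (u n)"
  define nr where "nr = real n"
  define T where "T = TT u n"
  define j1 where "j1 = LL + i"
  define j2 where "j2 = r - 1 - i"
  have U1: "1 \<le> U" using g0 unfolding good0_def U_def by simp
  have n0: "0 < nr" using xf unfolding nr_def by simp
  have Un: "U \<le> nr" using xf(2) n0 unfolding xx_def U_def nr_def by (simp add: divide_simps)
  have uln: "u n \<le> n" using Un unfolding U_def nr_def by simp
  have jk: "j1 \<le> k" "j2 \<le> k" "i \<le> k" "k - j1 = j2" unfolding j1_def j2_def using i LL_facts by auto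
  have gk: "4 * real k * (U + real k) \<le> nr" "4 * (real k)\<^sup>2 \<le> U" "4 * real k * (real k + 1) \<le> tau * U"
    "2 * (real k)\<^sup>2 \<le> nr" "4 \<le> mu * nr" using g unfolding good2_def U_def nr_def by auto
  have kk: "0 \<le> real k" by simp
  have TU: "real T \<le> tau * U" "tau * U - 1 \<le> real T" using TT_bounds[of u n] unfolding T_def U_def by auto
  define A1 where "A1 = (\<Prod>l<j1. real (n - u n) - real l)"
  define A2 where "A2 = (\<Prod>l<j2. real (u n) - real l)"
  define A3 where "A3 = (\<Prod>l<k. real n - real l)"
  define A4 where "A4 = (\<Prod>l<i. real T - real l)"
  define Mr where "Mr = mu * nr ^ (r - 1) / U ^ (r - 2)"
  have Mr_pos: "0 < Mr" unfolding Mr_def using mu n0 U1 by simp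
  have m_up: "real (mm u n) \<le> Mr" unfolding mm_def Mr_def U_def nr_def using Mr_pos[unfolded Mr_def U_def nr_def]
    by (simp add: of_nat_nat)
  have m_lo1: "Mr - 1 \<le> real (mm u n)" unfolding mm_def Mr_def U_def nr_def by linarith
  have em: "Mr * (1 - 1 / (mu * nr)) \<le> Mr - 1"
  proof -
    have "U ^ d' \<le> nr ^ d'" using Un U1 by (intro power_mono) auto
    then have "1 \<le> Mr / (mu * nr)" unfolding Mr_def d' r2' using mu n0 U1 by (simp add: divide_simps)
    then show ?thesis using Mr_pos mu n0 by (simp add: algebra_simps divide_simps)
  qed
  have A1b: "nr ^ j1 * (1 - real j1 * ((U + real k) / nr)) \<le> A1" "A1 \<le> nr ^ j1"
  proof -
    have d1: "0 \<le> (U + real k) / nr" "(U + real k) / nr \<le> 1"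
    proof -
      show "0 \<le> (U + real k) / nr" using U1 n0 by simp
      have k1: "1 \<le> real k" using LL_facts by simp
      have "(U + real k) * 1 \<le> (U + real k) * (4 * real k)" using k1 U1 by (intro mult_left_mono) auto
      then have "U + real k \<le> 4 * real k * (U + real k)" by (simp add: mult.commute)
      then show "(U + real k) / nr \<le> 1" using n0 gk by simp
    qed
    have "\<And>l. l < j1 \<Longrightarrow> nr * (1 - (U + real k) / nr) \<le> real (n - u n) - real l \<and> real (n - u n) - real l \<le> nr"
    proof -
      fix l assume l: "l < j1"
      have e1: "nr * (1 - (U + real k) / nr) = nr - U - real k" using n0 by (simp add: field_simps)
      have e2: "real (n - u n) - real l = nr - U - real l" using uln unfolding U_def nr_def by (simp add: of_nat_diff)
      have "real l \<le> real k" using l jk by simp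
      then show "nr * (1 - (U + real k) / nr) \<le> real (n - u n) - real l \<and> real (n - u n) - real l \<le> nr"
        unfolding e1 e2 using U1 by simp
    qed
    then show "nr ^ j1 * (1 - real j1 * ((U + real k) / nr)) \<le> A1" "A1 \<le> nr ^ j1"
      unfolding A1_def using prod_bounds[of nr "(U + real k) / nr" j1] n0 d1 by auto
  qed
  have k1: "1 \<le> real k" using LL_facts by simp
  have kU: "real k \<le> U"
  proof -
    have "real k \<le> (real k)\<^sup>2" using k1 by (simp add: power2_eq_square)
    then show ?thesis using gk(2) by linarith
  qed
  have tU: "0 < tau * U" using tau U1 by simp
  have A2b: "U ^ j2 * (1 - real j2 * (real k / U)) \<le> A2" "A2 \<le> U ^ j2"
  proof -
    have d1: "0 \<le> real k / U" "real k / U \<le> 1" using U1 kU by auto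
    have "\<And>l. l < j2 \<Longrightarrow> U * (1 - real k / U) \<le> real (u n) - real l \<and> real (u n) - real l \<le> U"
    proof -
      fix l assume l: "l < j2"
      have e1: "U * (1 - real k / U) = U - real k" using U1 by (simp add: field_simps)
      have "real l \<le> real k" using l jk by simp
      then show "U * (1 - real k / U) \<le> real (u n) - real l \<and> real (u n) - real l \<le> U"
        unfolding e1 U_def[symmetric] by simp
    qed
    then show "U ^ j2 * (1 - real j2 * (real k / U)) \<le> A2" "A2 \<le> U ^ j2"
      unfolding A2_def using prod_bounds[of U "real k / U" j2] U1 d1 by auto
  qed
  have A3b: "nr ^ k * (1 - real k * (real k / nr)) \<le> A3" "A3 \<le> nr ^ k"
  proof -
    have kn: "real k \<le> nr"
    proof -
      have "real k \<le> (real k)\<^sup>2" using k1 by (simp add: power2_eq_square)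
      then show ?thesis using gk(4) by linarith
    qed
    have d1: "0 \<le> real k / nr" "real k / nr \<le> 1" using n0 kn by auto
    have "\<And>l. l < k \<Longrightarrow> nr * (1 - real k / nr) \<le> real n - real l \<and> real n - real l \<le> nr"
    proof -
      fix l assume l: "l < k"
      have e1: "nr * (1 - real k / nr) = nr - real k" using n0 by (simp add: field_simps)
      have "real l \<le> real k" using l by simp
      then show "nr * (1 - real k / nr) \<le> real n - real l \<and> real n - real l \<le> nr"
        unfolding e1 nr_def[symmetric] by simp
    qed
    then show "nr ^ k * (1 - real k * (real k / nr)) \<le> A3" "A3 \<le> nr ^ k"
      unfolding A3_def using prod_bounds[of nr "real k / nr" k] n0 d1 by auto
  qed
  have A4b: "(tau * U) ^ i * (1 - real i * ((real k + 1) / (tau * U))) \<le> A4" "A4 \<le> (tau * U) ^ i"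
  proof -
    have "(real k + 1) * 1 \<le> (real k + 1) * (4 * real k)" using k1 by (intro mult_left_mono) auto
    then have "real k + 1 \<le> 4 * real k * (real k + 1)" by (simp add: mult.commute)
    then have kt: "real k + 1 \<le> tau * U" using gk(3) by linarith
    have d1: "0 \<le> (real k + 1) / (tau * U)" "(real k + 1) / (tau * U) \<le> 1" using tU kt by auto
    have "\<And>l. l < i \<Longrightarrow> (tau * U) * (1 - (real k + 1) / (tau * U)) \<le> real T - real l \<and> real T - real l \<le> tau * U"
    proof -
      fix l assume l: "l < i"
      have e1: "(tau * U) * (1 - (real k + 1) / (tau * U)) = tau * U - real k - 1" using tU tau U1 by (simp add: right_diff_distrib)
      have "real l \<le> real k" using l jk by simp
      then show "(tau * U) * (1 - (real k + 1) / (tau * U)) \<le> real T - real l \<and> real T - real l \<le> tau * U"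
        unfolding e1 using TU by simp
    qed
    then show "(tau * U) ^ i * (1 - real i * ((real k + 1) / (tau * U))) \<le> A4" "A4 \<le> (tau * U) ^ i"
      unfolding A4_def using prod_bounds[of "tau * U" "(real k + 1) / (tau * U)" i] tU d1 by auto
  qed
  define e1 where "e1 = 1 / (mu * nr)"
  define e2 where "e2 = real k * ((U + real k) / nr)"
  define e3 where "e3 = real k * (real k / U)"
  define e4 where "e4 = real k * ((real k + 1) / (tau * U))"
  define e5 where "e5 = real k * (real k / nr)"
  have es: "0 \<le> e1" "e1 \<le> 1/4" "0 \<le> e2" "e2 \<le> 1/4" "0 \<le> e3" "e3 \<le> 1/4" "0 \<le> e4" "e4 \<le> 1/4"
    "0 \<le> e5" "e5 \<le> 1/2"
    unfolding e1_def e2_def e3_def e4_def e5_def using mu n0 U1 tU gk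
    by (auto simp: divide_simps power2_eq_square algebra_simps)
  have j1k: "real j1 \<le> real k" "real j2 \<le> real k" "real i \<le> real k" using jk by auto
  have lb1: "Mr * (1 - e1) \<le> real (mm u n)" using m_lo1 em unfolding e1_def by linarith
  have lb2: "nr ^ j1 * (1 - e2) \<le> A1"
  proof -
    have "real j1 * ((U + real k) / nr) \<le> e2" unfolding e2_def using j1k U1 n0 by (intro mult_right_mono) auto
    then have "nr ^ j1 * (1 - e2) \<le> nr ^ j1 * (1 - real j1 * ((U + real k) / nr))" using n0 by (intro mult_left_mono) auto
    then show ?thesis using A1b by linarith
  qed
  have lb3: "U ^ j2 * (1 - e3) \<le> A2"
  proof -
    have "real j2 * (real k / U) \<le> e3" unfolding e3_def using j1k U1 by (intro mult_right_mono) auto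
    then have "U ^ j2 * (1 - e3) \<le> U ^ j2 * (1 - real j2 * (real k / U))" using U1 by (intro mult_left_mono) auto
    then show ?thesis using A2b by linarith
  qed
  have lb4: "(tau * U) ^ i * (1 - e4) \<le> A4"
  proof -
    have "real i * ((real k + 1) / (tau * U)) \<le> e4" unfolding e4_def using j1k tU by (intro mult_right_mono) auto
    then have "(tau * U) ^ i * (1 - e4) \<le> (tau * U) ^ i * (1 - real i * ((real k + 1) / (tau * U)))" using tU by (intro mult_left_mono) auto
    then show ?thesis using A4b by linarith
  qed
  have lb5: "nr ^ (k + i) * (1 - e5) \<le> A3 * nr ^ i"
  proof -
    have "nr ^ k * (1 - e5) * nr ^ i \<le> A3 * nr ^ i" using A3b n0 unfolding e5_def by (intro mult_right_mono) auto
    then show ?thesis by (simp add: power_add mult_ac)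
  qed
  have ub5: "A3 * nr ^ i \<le> nr ^ (k + i)" using A3b n0 by (simp add: power_add mult_right_mono)
  have nn: "0 \<le> Mr * (1 - e1)" "0 \<le> nr ^ j1 * (1 - e2)" "0 \<le> U ^ j2 * (1 - e3)" "0 \<le> (tau * U) ^ i * (1 - e4)"
    using Mr_pos n0 U1 tU es by auto
  define Z where "Z = Mr * nr ^ j1 * U ^ j2 * (tau * U) ^ i"
  define NN' where "NN' = real (mm u n) * A1 * A2 * A4"
  have Nlo: "Z * (1 - (e1 + e2 + e3 + e4)) \<le> NN'"
  proof -
    have "(Mr * (1 - e1)) * (nr ^ j1 * (1 - e2)) * (U ^ j2 * (1 - e3)) * ((tau * U) ^ i * (1 - e4)) \<le> NN'"
      unfolding NN'_def using nn lb1 lb2 lb3 lb4 by (intro mult4_mono) auto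
    moreover have "(Mr * (1 - e1)) * (nr ^ j1 * (1 - e2)) * (U ^ j2 * (1 - e3)) * ((tau * U) ^ i * (1 - e4))
       = Z * ((1 - e1) * (1 - e2) * (1 - e3) * (1 - e4))" unfolding Z_def by (simp add: mult_ac)
    moreover have "Z * (1 - (e1 + e2 + e3 + e4)) \<le> Z * ((1 - e1) * (1 - e2) * (1 - e3) * (1 - e4))"
      using prod4_lower[of e1 e2 e3 e4] es Mr_pos n0 U1 tU unfolding Z_def by (intro mult_left_mono) auto
    ultimately show ?thesis by linarith
  qed
  have Nup: "NN' \<le> Z"
    unfolding NN'_def Z_def using nn lb1 lb2 lb3 lb4 m_up A1b A2b A4b by (intro mult4_mono) auto
  have ZG: "Z / nr ^ (k + i) = mu * tau ^ i * U"
  proof -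
    have q1: "Suc d' + j1 = k + i" "j2 + i = Suc d'" unfolding j1_def j2_def using d' LL_facts i by auto
    have "Z = mu * (nr ^ Suc d' * nr ^ j1) * ((U ^ j2 * U ^ i) / U ^ d') * tau ^ i"
      unfolding Z_def Mr_def d' r2' by (simp add: power_mult_distrib)
    also have "nr ^ Suc d' * nr ^ j1 = nr ^ (k + i)" by (simp only: power_add[symmetric] q1)
    also have "U ^ j2 * U ^ i = U ^ Suc d'" by (simp only: power_add[symmetric] q1)
    also have "U ^ Suc d' / U ^ d' = U" using U1 by simp
    finally have "Z = mu * nr ^ (k + i) * U * tau ^ i" .
    then show ?thesis using n0 by simp
  qed
  have Zp: "0 < Z" unfolding Z_def using Mr_pos n0 U1 tU by simp
  have RE: "\<bar>NN' / (A3 * nr ^ i) - mu * tau ^ i * U\<bar> \<le> mu * tau ^ i * U * ((e1 + e2 + e3 + e4) + 2 * e5)"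
    using ratio_est[OF Zp _ Nlo Nup lb5 ub5] es n0 unfolding ZG by auto
  have A3p: "0 < A3"
  proof -
    have "0 < nr ^ k * (1 - e5)" using es n0 by simp
    then show ?thesis using A3b(1) unfolding e5_def by linarith
  qed
  have b1: "real (n - u n choose j1) = A1 / fact j1" unfolding A1_def by (rule binom_prod)
  have b2: "real (u n choose (k - j1)) = A2 / fact j2" unfolding A2_def jk(4) by (rule binom_prod)
  have b3: "real (n choose k) = A3 / fact k" unfolding A3_def by (rule binom_prod)
  have b4: "real (T choose i) = A4 / fact i" unfolding A4_def by (rule binom_prod)
  have b5: "pochhammer (real LL + 1) i = fact j1 / fact LL" using poch_fact[of LL i] unfolding j1_def
    by (simp add: field_simps)
  have Qeq: "real (mm u n) * pj k u n (LL + i) * pochhammer (real LL + 1) i * real (TT u n choose i) / real n ^ i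
      = NN' / (A3 * nr ^ i) * WW i"
  proof -
    have "real (mm u n) * pj k u n (LL + i) * pochhammer (real LL + 1) i * real (TT u n choose i) / real n ^ i
       = real (mm u n) * ((A1 / fact j1) * (A2 / fact j2) / (A3 / fact k)) * (fact j1 / fact LL) * (A4 / fact i) / nr ^ i"
      unfolding pj_def b5 j1_def[symmetric] b1 b2 b3 T_def[symmetric] b4 nr_def ..
    also have "\<dots> = NN' / (A3 * nr ^ i) * (fact k / (fact LL * fact i * fact j2))"
      unfolding NN'_def using A3p n0 by (intro alg_Q) auto
    also have "fact k / (fact LL * fact i * fact j2) = WW i" using WW_fact[OF i] unfolding j2_def by simp
    finally show ?thesis .
  qed
  have W0: "0 \<le> WW i" unfolding WW_def by simp
  have "\<bar>NN' / (A3 * nr ^ i) * WW i - mu * tau ^ i * U * WW i\<bar> = WW i * \<bar>NN' / (A3 * nr ^ i) - mu * tau ^ i * U\<bar>"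
  proof -
    have "NN' / (A3 * nr ^ i) * WW i - mu * tau ^ i * U * WW i = WW i * (NN' / (A3 * nr ^ i) - mu * tau ^ i * U)"
      by (simp add: right_diff_distrib mult_ac)
    then show ?thesis using W0 by (simp add: abs_mult)
  qed
  also have "\<dots> \<le> WW i * (mu * tau ^ i * U * ((e1 + e2 + e3 + e4) + 2 * e5))" using RE W0 by (intro mult_left_mono) auto
  also have "(e1 + e2 + e3 + e4) + 2 * e5 = epsQ u n"
    unfolding epsQ_def e1_def e2_def e3_def e4_def e5_def U_def nr_def by (simp add: power2_eq_square)
  finally show ?thesis unfolding Qeq U_def by (simp add: mult_ac)
qed

end




context Sett begin

lemma good2_good1: "good2 u n \<Longrightarrow> good1 u n" unfolding good2_def by simp

lemma lev_all:
  assumes g: "good1 u n"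
  shows "1 \<le> i \<Longrightarrow> i \<le> r - 1 \<Longrightarrow> S \<le> TT u n \<Longrightarrow>
    \<bar>aa u n S (LL + i) - ahat n i S\<bar> \<le> Mf (i - 1) * xx u n ^ i * real S / real n"
proof (induction i arbitrary: S)
  case 0
  then show ?case by simp
next
  case (Suc i)
  show ?case
  proof (cases i)
    case 0
    then show ?thesis using lev1[OF g Suc(4)] by simp
  next
    case (Suc p)
    have prev: "\<And>S. S \<le> TT u n \<Longrightarrow> \<bar>aa u n S (LL + Suc p) - ahat n (Suc p) S\<bar> \<le> Mf p * xx u n ^ Suc p * real S / real n"
      using Suc.IH Suc.prems \<open>i = Suc p\<close> by simp
    show ?thesis using levS[OF g _ prev Suc.prems(3)] Suc.prems \<open>i = Suc p\<close> by simp
  qed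
qed

lemma pj_nonneg: "0 \<le> pj k u n j" unfolding pj_def by simp

lemma pj_sum: assumes "u n \<le> n" "k \<le> n" shows "(\<Sum>j\<le>k. pj k u n j) = 1"
proof -
  have "(\<Sum>j\<le>k. (n - u n choose j) * (u n choose (k - j))) = (n - u n + u n) choose k" by (rule vandermonde)
  also have "n - u n + u n = n" using assms by simp
  finally have v: "(\<Sum>j\<le>k. real (n - u n choose j) * real (u n choose (k - j))) = real (n choose k)"
    by (metis (mono_tags, lifting) of_nat_mult of_nat_sum sum.cong)
  have "0 < real (n choose k)" using assms by simp
  then show ?thesis unfolding pj_def using v by (simp add: sum_divide_distrib[symmetric])
qed

lemma pj_up:
  assumes g: "good2 u n" and j: "j \<le> k"
  shows "real (mm u n) * pj k u n j * xx u n ^ j \<le> mu * real k ^ k * real (u n) * xx u n ^ LL"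
proof -
  have g1: "good1 u n" using g by (rule good2_good1)
  note gf = good1_facts[OF g1]
  note g0 = gf(1)
  note xf = x_facts[OF g0]
  define d' where "d' = r - 2"
  have d': "r - 1 = Suc d'" unfolding d'_def using r2 by simp
  define U where "U = real (u n)"
  define nr where "nr = real n"
  have U1: "1 \<le> U" using g0 unfolding good0_def U_def by simp
  have n0: "0 < nr" using xf unfolding nr_def by simp
  have Un: "U \<le> nr" using xf(2) n0 unfolding xx_def U_def nr_def by (simp add: divide_simps)
  have k1: "1 \<le> real k" using LL_facts by simp
  have kn: "real k \<le> nr"
  proof -
    have "real k \<le> (real k)\<^sup>2" using k1 by (simp add: power2_eq_square)
    moreover have "2 * (real k)\<^sup>2 \<le> nr" using g unfolding good2_def nr_def by simp
    ultimately show ?thesis by linarith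
  qed
  define Mr where "Mr = mu * nr ^ (r - 1) / U ^ (r - 2)"
  have Mr_pos: "0 < Mr" unfolding Mr_def using mu n0 U1 by simp
  have m_up: "real (mm u n) \<le> Mr" unfolding mm_def Mr_def U_def nr_def using Mr_pos[unfolded Mr_def U_def nr_def]
    by (simp add: of_nat_nat)
  have c1: "real (n - u n choose j) \<le> nr ^ j"
  proof (cases "j \<le> n - u n")
    case True
    then have "real (n - u n choose j) \<le> real (n - u n) ^ j" using binomial_le_pow[OF True] by (metis of_nat_le_iff of_nat_power)
    also have "\<dots> \<le> nr ^ j" unfolding nr_def by (intro power_mono) auto
    finally show ?thesis .
  next
    case False then show ?thesis using n0 by (simp add: binomial_eq_0)
  qed
  have c2: "real (u n choose (k - j)) \<le> U ^ (k - j)"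
  proof (cases "k - j \<le> u n")
    case True
    then show ?thesis using binomial_le_pow[OF True] unfolding U_def by (metis of_nat_le_iff of_nat_power)
  next
    case False then show ?thesis using U1 by (simp add: binomial_eq_0)
  qed
  have c3: "(nr / real k) ^ k \<le> real (n choose k)" unfolding nr_def
    by (rule binomial_ge_n_over_k_pow_k) (use kn nr_def in simp)
  have c3p: "0 < (nr / real k) ^ k" using n0 k1 by simp
  have "pj k u n j \<le> nr ^ j * U ^ (k - j) / (nr / real k) ^ k"
    unfolding pj_def using c1 c2 c3 c3p by (intro frac_le mult_mono) auto
  then have "real (mm u n) * pj k u n j \<le> Mr * (nr ^ j * U ^ (k - j) / (nr / real k) ^ k)"
    using m_up Mr_pos pj_nonneg by (intro mult_mono) auto
  then have "real (mm u n) * pj k u n j * (U / nr) ^ j \<le> Mr * (nr ^ j * U ^ (k - j) / (nr / real k) ^ k) * (U / nr) ^ j"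
    using n0 U1 by (intro mult_right_mono) auto
  also have "\<dots> = mu * real k ^ k * U * (U / nr) ^ LL"
  proof -
    have e1: "k - j + j = k" using j by simp
    have e2: "LL + Suc d' = k" using LL_facts d' by simp
    have "Mr * (nr ^ j * U ^ (k - j) / (nr / real k) ^ k) * (U / nr) ^ j
        = mu * real k ^ k * (nr ^ Suc d' * U ^ (k - j + j)) / (U ^ d' * nr ^ k)"
      unfolding Mr_def d' d'_def[symmetric] using n0 U1 k1 by (simp add: field_simps power_divide power_add[symmetric])
    also have "\<dots> = mu * real k ^ k * (nr ^ Suc d' * U ^ (LL + Suc d')) / (U ^ d' * nr ^ (LL + Suc d'))"
      unfolding e1 e2 ..
    also have "\<dots> = mu * real k ^ k * U * (U / nr) ^ LL"
      using n0 U1 by (simp add: power_add field_simps power_divide)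
    finally show ?thesis .
  qed
  finally show ?thesis unfolding xx_def U_def nr_def .
qed

definition Ceps :: real where "Ceps = 1 / mu + real k + 4 * (real k)\<^sup>2 + real k * (real k + 1) / tau"

lemma UepsQ:
  assumes g: "good2 u n"
  shows "real (u n) * epsQ u n \<le> Ceps * (real (u n) * xx u n + 1)"
proof -
  have g1: "good1 u n" using g by (rule good2_good1)
  note g0 = good1_facts(1)[OF g1]
  note xf = x_facts[OF g0]
  define U where "U = real (u n)"
  define nr where "nr = real n"
  define x where "x = xx u n"
  have U1: "1 \<le> U" using g0 unfolding good0_def U_def by simp
  have n0: "0 < nr" using xf unfolding nr_def by simp
  have x0: "0 < x" "x \<le> 1" using xf unfolding x_def by auto
  have xe: "x = U / nr" unfolding x_def xx_def U_def nr_def ..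
  have xU: "x \<le> U * x" using U1 x0 by simp
  have kk: "0 \<le> real k" by simp
  have "U * epsQ u n = x / mu + real k * (U * x) + (real k)\<^sup>2 * x + (real k)\<^sup>2 + real k * (real k + 1) / tau + 2 * (real k)\<^sup>2 * x"
    unfolding epsQ_def U_def[symmetric] nr_def[symmetric] xe using U1 n0 mu tau
    by (simp add: field_simps power2_eq_square)
  also have "\<dots> \<le> (U * x) / mu + real k * (U * x) + (real k)\<^sup>2 * (U * x) + (real k)\<^sup>2 + real k * (real k + 1) / tau + 2 * (real k)\<^sup>2 * (U * x)"
    using xU mu kk by (intro add_mono mult_left_mono divide_right_mono order_refl) auto
  also have "\<dots> \<le> Ceps * (U * x + 1)"
  proof -
    have ux: "0 \<le> U * x" using U1 x0 by simp
    have "Ceps * (U * x + 1) - ((U * x) / mu + real k * (U * x) + (real k)\<^sup>2 * (U * x) + (real k)\<^sup>2 + real k * (real k + 1) / tau + 2 * (real k)\<^sup>2 * (U * x))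
       = (real k)\<^sup>2 * (U * x) + real k * (real k + 1) / tau * (U * x) + 1 / mu + real k + 3 * (real k)\<^sup>2"
      unfolding Ceps_def by (simp add: algebra_simps add_divide_distrib)
    moreover have "0 \<le> (real k)\<^sup>2 * (U * x) + real k * (real k + 1) / tau * (U * x) + 1 / mu + real k + 3 * (real k)\<^sup>2"
      using ux tau mu U1 x0 by (intro add_nonneg_nonneg mult_nonneg_nonneg) auto
    ultimately show ?thesis by linarith
  qed
  finally show ?thesis unfolding U_def x_def .
qed

definition theta :: "(nat \<Rightarrow> nat) \<Rightarrow> nat \<Rightarrow> nat \<Rightarrow> real" where
  "theta u n j = (if 1 \<le> j \<and> j \<le> k - r + 1 then bb u n (TT u n) * real j
     else if k - r + 2 \<le> j \<and> j \<le> k then aa u n (TT u n) j else 0)"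

definition Eb :: real where "Eb = exp (real k * (\<bar>lam\<bar> + 1)) + 1"

lemma bT_bound: assumes g: "good1 u n" shows "\<bar>bb u n (TT u n) - lam\<bar> \<le> Cb * tau * xx u n"
proof -
  note g0 = good1_facts(1)[OF g]
  note xf = x_facts[OF g0]
  have "\<bar>bb u n (TT u n) - lam\<bar> \<le> Cb * real (TT u n) / real n" using bb_bound[OF g0] by simp
  also have "\<dots> = Cb * (real (TT u n) / real n)" by simp
  also have "\<dots> \<le> Cb * (tau * xx u n)" using xf(5)[of "TT u n"] Cb_pos by (intro mult_left_mono) auto
  finally show ?thesis by simp
qed

lemma mp_bound:
  assumes g: "good2 u n" and j: "j \<le> k"
  shows "real (mm u n) * pj k u n j * xx u n ^ j \<le> mu * real k ^ k * real (u n) * xx u n ^ LL" "0 \<le> real (mm u n) * pj k u n j"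
  using pj_up[OF g j] pj_nonneg by auto

lemma lowterm:
  assumes g: "good2 u n" and j: "j < LL"
  shows "\<bar>real (mm u n) * pj k u n j * (exp (theta u n j) - 1)\<bar> \<le> mu * real k ^ k * Eb * (real (u n) * xx u n)"
proof -
  have g1: "good1 u n" using g by (rule good2_good1)
  note gf = good1_facts[OF g1]
  note xf = x_facts[OF gf(1)]
  define x where "x = xx u n"
  have x0: "0 < x" "x \<le> 1" using xf unfolding x_def by auto
  have jk: "j \<le> k" using j LL_facts by simp
  have mp: "real (mm u n) * pj k u n j \<le> mu * real k ^ k * real (u n) * x"
  proof -
    have "real (mm u n) * pj k u n j * x ^ j \<le> mu * real k ^ k * real (u n) * x ^ LL"
      using pj_up[OF g jk] unfolding x_def .
    also have "x ^ LL = x ^ (LL - j - 1) * x * x ^ j"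
    proof -
      have e: "(LL - j - 1) + 1 + j = LL" using j by simp
      have "x ^ LL = x ^ ((LL - j - 1) + 1 + j)" by (simp only: e)
      also have "\<dots> = x ^ (LL - j - 1) * x * x ^ j" by (simp only: power_add power_one_right)
      finally show ?thesis .
    qed
    also have "x ^ (LL - j - 1) \<le> 1" using x0 by (simp add: power_le_one)
    then have "mu * real k ^ k * real (u n) * (x ^ (LL - j - 1) * x * x ^ j) \<le> mu * real k ^ k * real (u n) * (1 * x * x ^ j)"
      using x0 mu by (intro mult_left_mono mult_right_mono) auto
    finally have "real (mm u n) * pj k u n j * x ^ j \<le> (mu * real k ^ k * real (u n) * x) * x ^ j" by (simp add: mult_ac)
    then show ?thesis using x0 by simp
  qed
  have th: "\<bar>exp (theta u n j) - 1\<bar> \<le> Eb"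
  proof -
    have bb1: "\<bar>bb u n (TT u n) - lam\<bar> \<le> 1" using bb_le1[OF gf(1)] by simp
    have "theta u n j \<le> real k * (\<bar>lam\<bar> + 1)"
    proof -
      have "\<bar>bb u n (TT u n)\<bar> \<le> \<bar>lam\<bar> + 1" using bb1 by linarith
      then have "\<bar>bb u n (TT u n) * real j\<bar> \<le> (\<bar>lam\<bar> + 1) * real k" unfolding abs_mult using jk
        by (intro mult_mono) auto
      moreover have "k - r + 1 = LL" unfolding LL_def ..
      ultimately show ?thesis unfolding theta_def using j by (auto simp: mult.commute)
    qed
    then have "exp (theta u n j) \<le> exp (real k * (\<bar>lam\<bar> + 1))" by simp
    then show ?thesis unfolding Eb_def using exp_gt_zero[of "theta u n j"] by linarith
  qed
  have "\<bar>real (mm u n) * pj k u n j * (exp (theta u n j) - 1)\<bar> = real (mm u n) * pj k u n j * \<bar>exp (theta u n j) - 1\<bar>"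
    using mp_bound(2)[OF g jk] by (simp add: abs_mult pj_nonneg)
  also have "\<dots> \<le> (mu * real k ^ k * real (u n) * x) * Eb"
    by (rule mult_mono[OF mp th]) (use mu x0 in auto)
  finally show ?thesis unfolding x_def by (simp add: mult_ac)
qed

definition C0 :: real where
  "C0 = mu * real k ^ k * (2 * exp (real LL * \<bar>lam\<bar>) * real LL * Cb * tau) + \<bar>cc\<bar> * mu * WW 0 * Ceps"

lemma abs_mult_nonneg: fixes a b :: real shows "0 \<le> a \<Longrightarrow> \<bar>a * b\<bar> = a * \<bar>b\<bar>" by (simp add: abs_mult)

lemma term0:
  assumes g: "good2 u n"
  shows "\<bar>real (mm u n) * pj k u n LL * (exp (theta u n LL) - 1) - cc * (mu * tau ^ 0 * real (u n) * WW 0)\<bar>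
    \<le> C0 * (real (u n) * xx u n + 1)"
proof -
  have g1: "good1 u n" using g by (rule good2_good1)
  note gf = good1_facts[OF g1]
  note xf = x_facts[OF gf(1)]
  define x where "x = xx u n"
  define U where "U = real (u n)"
  define mp where "mp = real (mm u n) * pj k u n LL"
  have x0: "0 < x" "x \<le> 1" using xf unfolding x_def by auto
  have U1: "1 \<le> U" using gf(1) unfolding good0_def U_def by simp
  have LLk: "LL \<le> k" using LL_facts by simp
  have mp0: "0 \<le> mp" unfolding mp_def using pj_nonneg by simp
  have mpb: "mp \<le> mu * real k ^ k * U"
  proof -
    have "mp * x ^ LL \<le> (mu * real k ^ k * U) * x ^ LL" using pj_up[OF g LLk] unfolding mp_def x_def U_def .
    then show ?thesis using x0 by simp
  qed
  have th: "theta u n LL = bb u n (TT u n) * real LL" unfolding theta_def using LL_facts by (simp add: LL_def)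
  have bT: "\<bar>bb u n (TT u n) - lam\<bar> \<le> Cb * tau * x" using bT_bound[OF g1] unfolding x_def .
  have d: "\<bar>bb u n (TT u n) * real LL - real LL * lam\<bar> \<le> real LL * Cb * tau * x"
  proof -
    have "bb u n (TT u n) * real LL - real LL * lam = real LL * (bb u n (TT u n) - lam)" by (simp add: algebra_simps)
    then have "\<bar>bb u n (TT u n) * real LL - real LL * lam\<bar> = real LL * \<bar>bb u n (TT u n) - lam\<bar>"
      by (simp add: abs_mult)
    also have "\<dots> \<le> real LL * (Cb * tau * x)" using bT by (intro mult_left_mono) auto
    finally show ?thesis by (simp add: mult_ac)
  qed
  have d1: "\<bar>bb u n (TT u n) * real LL - real LL * lam\<bar> \<le> 1"
  proof -
    have "real LL * Cb * tau * x \<le> (real LL * Cb * tau + KA) * x" using KA_ge1 x0 by (simp add: algebra_simps)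
    then show ?thesis using d gf(4) unfolding x_def by linarith
  qed
  have ed: "\<bar>exp (theta u n LL) - exp (real LL * lam)\<bar> \<le> 2 * exp (real LL * \<bar>lam\<bar>) * (real LL * Cb * tau * x)"
  proof -
    have "\<bar>exp (theta u n LL) - exp (real LL * lam)\<bar> \<le> 2 * exp (real LL * lam) * \<bar>bb u n (TT u n) * real LL - real LL * lam\<bar>"
      unfolding th by (rule exp_lip[OF d1])
    also have "\<dots> \<le> 2 * exp (real LL * \<bar>lam\<bar>) * (real LL * Cb * tau * x)"
    proof -
      have "exp (real LL * lam) \<le> exp (real LL * \<bar>lam\<bar>)" by (simp add: mult_left_mono)
      then show ?thesis using d by (intro mult_mono) auto
    qed
    finally show ?thesis .
  qed
  have Q0: "\<bar>mp - mu * U * WW 0\<bar> \<le> mu * U * WW 0 * epsQ u n"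
    using Q_est[OF g, of 0] unfolding mp_def U_def by simp
  have W0: "0 \<le> WW 0" unfolding WW_def by simp
  have split: "real (mm u n) * pj k u n LL * (exp (theta u n LL) - 1) - cc * (mu * tau ^ 0 * U * WW 0)
     = mp * (exp (theta u n LL) - exp (real LL * lam)) + cc * (mp - mu * U * WW 0)"
    unfolding mp_def cc_def by (simp add: algebra_simps)
  have "\<bar>real (mm u n) * pj k u n LL * (exp (theta u n LL) - 1) - cc * (mu * tau ^ 0 * U * WW 0)\<bar>
     \<le> \<bar>mp * (exp (theta u n LL) - exp (real LL * lam))\<bar> + \<bar>cc * (mp - mu * U * WW 0)\<bar>"
    unfolding split by (rule abs_triangle_ineq)
  also have "\<dots> = mp * \<bar>exp (theta u n LL) - exp (real LL * lam)\<bar> + \<bar>cc\<bar> * \<bar>mp - mu * U * WW 0\<bar>"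
    using mp0 by (simp add: abs_mult)
  also have "\<dots> \<le> (mu * real k ^ k * U) * (2 * exp (real LL * \<bar>lam\<bar>) * (real LL * Cb * tau * x)) + \<bar>cc\<bar> * (mu * WW 0 * (U * epsQ u n))"
  proof (rule add_mono)
    show "mp * \<bar>exp (theta u n LL) - exp (real LL * lam)\<bar> \<le> (mu * real k ^ k * U) * (2 * exp (real LL * \<bar>lam\<bar>) * (real LL * Cb * tau * x))"
      by (rule mult_mono[OF mpb ed]) (use mu U1 in auto)
    show "\<bar>cc\<bar> * \<bar>mp - mu * U * WW 0\<bar> \<le> \<bar>cc\<bar> * (mu * WW 0 * (U * epsQ u n))"
      using Q0 by (intro mult_left_mono) (auto simp: mult_ac)
  qed
  also have "\<dots> \<le> (mu * real k ^ k * (2 * exp (real LL * \<bar>lam\<bar>) * real LL * Cb * tau)) * (U * x + 1) + (\<bar>cc\<bar> * mu * WW 0 * Ceps) * (U * x + 1)"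
  proof (rule add_mono)
    have "0 \<le> mu * real k ^ k * (2 * exp (real LL * \<bar>lam\<bar>) * real LL * Cb * tau)" using mu tau Cb_pos by simp
    then show "(mu * real k ^ k * U) * (2 * exp (real LL * \<bar>lam\<bar>) * (real LL * Cb * tau * x))
       \<le> (mu * real k ^ k * (2 * exp (real LL * \<bar>lam\<bar>) * real LL * Cb * tau)) * (U * x + 1)"
      by (simp add: algebra_simps)
    have "U * epsQ u n \<le> Ceps * (U * x + 1)" using UepsQ[OF g] unfolding U_def x_def .
    then show "\<bar>cc\<bar> * (mu * WW 0 * (U * epsQ u n)) \<le> (\<bar>cc\<bar> * mu * WW 0 * Ceps) * (U * x + 1)"
      using mu W0 by (simp add: mult_left_mono mult.assoc)
  qed
  also have "\<dots> = C0 * (U * x + 1)" unfolding C0_def by (simp add: algebra_simps)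
  finally show ?thesis unfolding U_def x_def .
qed

definition Ci :: "nat \<Rightarrow> real" where
  "Ci i = mu * real k ^ k * (KA\<^sup>2 + Mf (i - 1) * tau) + \<bar>cc\<bar> * mu * tau ^ i * WW i * Ceps"

lemma termi:
  assumes g: "good2 u n" and i: "1 \<le> i" "i \<le> r - 1"
  shows "\<bar>real (mm u n) * pj k u n (LL + i) * (exp (theta u n (LL + i)) - 1) - cc * (mu * tau ^ i * real (u n) * WW i)\<bar>
    \<le> Ci i * (real (u n) * xx u n + 1)"
proof -
  have g1: "good1 u n" using g by (rule good2_good1)
  note gf = good1_facts[OF g1]
  note xf = x_facts[OF gf(1)]
  define x where "x = xx u n"
  define U where "U = real (u n)"
  define T where "T = TT u n"
  define j where "j = LL + i"
  define mp where "mp = real (mm u n) * pj k u n j"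
  define a where "a = aa u n T j"
  define A where "A = ahat n i T"
  have x0: "0 < x" "x \<le> 1" using xf unfolding x_def by auto
  have U1: "1 \<le> U" using gf(1) unfolding good0_def U_def by simp
  have jk: "j \<le> k" unfolding j_def using i LL_facts by linarith
  have mp0: "0 \<le> mp" unfolding mp_def using pj_nonneg by simp
  have xi: "0 < x ^ i" using x0 by simp
  have mpb: "mp * x ^ i \<le> mu * real k ^ k * U"
  proof -
    have "mp * x ^ j \<le> (mu * real k ^ k * U) * x ^ LL" using pj_up[OF g jk] unfolding mp_def x_def U_def .
    then have "(mp * x ^ i) * x ^ LL \<le> (mu * real k ^ k * U) * x ^ LL" unfolding j_def by (simp add: power_add mult_ac)
    then show ?thesis using x0 by simp
  qed
  have th: "theta u n j = a" unfolding theta_def a_def T_def j_def using i LL_facts by (auto simp: LL_def)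
  have lev: "\<bar>a - A\<bar> \<le> Mf (i - 1) * x ^ i * real T / real n"
    using lev_all[OF g1 i, of T] unfolding a_def A_def T_def x_def j_def by simp
  have ik: "i - 1 < k" using i rk by linarith
  have Mt: "Mf (i - 1) * tau * x \<le> 1"
  proof -
    have "Mf (i - 1) * tau * x \<le> Mbig * tau * x" using Mf_le_Mbig[OF ik] tau x0 by (intro mult_right_mono) auto
    then show ?thesis using gf(2) unfolding x_def by linarith
  qed
  have aA: "\<bar>a - A\<bar> \<le> Mf (i - 1) * tau * x * x ^ i"
  proof -
    have "Mf (i - 1) * x ^ i * real T / real n = Mf (i - 1) * x ^ i * (real T / real n)" by simp
    also have "\<dots> \<le> Mf (i - 1) * x ^ i * (tau * x)"
      using xf(5)[of T] Mf_nonneg xi unfolding T_def x_def by (intro mult_left_mono) auto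
    finally show ?thesis using lev by (simp add: mult_ac)
  qed
  have Ab: "\<bar>A\<bar> \<le> (KA - 1) * x ^ i" using ahat_bound[OF gf(1) _ i(2), of T] unfolding A_def T_def x_def by simp
  have ab: "\<bar>a\<bar> \<le> KA * x ^ i"
  proof -
    have "Mf (i - 1) * tau * x * x ^ i \<le> 1 * x ^ i" using Mt xi by (intro mult_right_mono) auto
    then show ?thesis using aA Ab by (simp add: algebra_simps)
  qed
  have a1: "\<bar>a\<bar> \<le> 1"
  proof -
    have "x ^ i \<le> x" using x0 i by (metis power_decreasing power_one_right less_le)
    then have "KA * x ^ i \<le> KA * x" using KA_ge1 by (intro mult_left_mono) auto
    then show ?thesis using ab gf(3) unfolding x_def by linarith
  qed
  have eq: "\<bar>exp a - 1 - a\<bar> \<le> KA\<^sup>2 * (x ^ i)\<^sup>2"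
  proof -
    have "\<bar>exp a - 1 - a\<bar> \<le> a\<^sup>2" by (rule exp_quad_abs[OF a1])
    also have "\<dots> = \<bar>a\<bar>\<^sup>2" by simp
    also have "\<dots> \<le> (KA * x ^ i)\<^sup>2" by (rule power_mono[OF ab]) simp
    finally show ?thesis by (simp add: power_mult_distrib)
  qed
  have Qi: "\<bar>mp * pochhammer (real LL + 1) i * real (T choose i) / real n ^ i - mu * tau ^ i * U * WW i\<bar>
      \<le> mu * tau ^ i * U * WW i * epsQ u n"
    using Q_est[OF g i(2)] unfolding mp_def j_def T_def U_def .
  have mpA: "mp * A = cc * (mp * pochhammer (real LL + 1) i * real (T choose i) / real n ^ i)"
    unfolding A_def ahat_def by (simp add: algebra_simps)
  have split: "mp * (exp a - 1) - cc * (mu * tau ^ i * U * WW i)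
      = mp * (exp a - 1 - a) + mp * (a - A) + cc * (mp * pochhammer (real LL + 1) i * real (T choose i) / real n ^ i - mu * tau ^ i * U * WW i)"
    using mpA by (simp add: algebra_simps)
  have W0: "0 \<le> WW i" unfolding WW_def by simp
  have "\<bar>mp * (exp a - 1) - cc * (mu * tau ^ i * U * WW i)\<bar>
      \<le> mp * \<bar>exp a - 1 - a\<bar> + mp * \<bar>a - A\<bar> + \<bar>cc\<bar> * \<bar>mp * pochhammer (real LL + 1) i * real (T choose i) / real n ^ i - mu * tau ^ i * U * WW i\<bar>"
  proof -
    have "\<bar>mp * (exp a - 1 - a) + mp * (a - A) + cc * (mp * pochhammer (real LL + 1) i * real (T choose i) / real n ^ i - mu * tau ^ i * U * WW i)\<bar>
      \<le> \<bar>mp * (exp a - 1 - a)\<bar> + \<bar>mp * (a - A)\<bar> + \<bar>cc * (mp * pochhammer (real LL + 1) i * real (T choose i) / real n ^ i - mu * tau ^ i * U * WW i)\<bar>"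
      by (rule order_trans[OF abs_triangle_ineq add_right_mono[OF abs_triangle_ineq]])
    then show ?thesis unfolding split using mp0 by (simp add: abs_mult)
  qed
  also have "\<dots> \<le> mp * (KA\<^sup>2 * (x ^ i)\<^sup>2) + mp * (Mf (i - 1) * tau * x * x ^ i) + \<bar>cc\<bar> * (mu * tau ^ i * U * WW i * epsQ u n)"
    using eq aA Qi mp0 by (intro add_mono mult_left_mono) auto
  also have "\<dots> = (mp * x ^ i) * (KA\<^sup>2 * x ^ i) + (mp * x ^ i) * (Mf (i - 1) * tau * x) + \<bar>cc\<bar> * mu * tau ^ i * WW i * (U * epsQ u n)"
    by (simp add: power2_eq_square mult_ac)
  also have "\<dots> \<le> (mu * real k ^ k * U) * (KA\<^sup>2 * x) + (mu * real k ^ k * U) * (Mf (i - 1) * tau * x) + \<bar>cc\<bar> * mu * tau ^ i * WW i * (Ceps * (U * x + 1))"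
  proof (intro add_mono)
    have "x ^ i \<le> x" using x0 i by (metis power_decreasing power_one_right less_le)
    then have kx: "KA\<^sup>2 * x ^ i \<le> KA\<^sup>2 * x" by (intro mult_left_mono) auto
    show "(mp * x ^ i) * (KA\<^sup>2 * x ^ i) \<le> (mu * real k ^ k * U) * (KA\<^sup>2 * x)"
      by (rule mult_mono[OF mpb kx]) (use mu U1 mp0 xi in auto)
    show "(mp * x ^ i) * (Mf (i - 1) * tau * x) \<le> (mu * real k ^ k * U) * (Mf (i - 1) * tau * x)"
      using mpb Mf_nonneg tau x0 by (intro mult_right_mono) auto
    have "U * epsQ u n \<le> Ceps * (U * x + 1)" using UepsQ[OF g] unfolding U_def x_def .
    then show "\<bar>cc\<bar> * mu * tau ^ i * WW i * (U * epsQ u n) \<le> \<bar>cc\<bar> * mu * tau ^ i * WW i * (Ceps * (U * x + 1))"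
      using mu tau W0 by (intro mult_left_mono) auto
  qed
  also have "\<dots> \<le> Ci i * (U * x + 1)"
  proof -
    have "0 \<le> mu * real k ^ k * (KA\<^sup>2 + Mf (i - 1) * tau)" using mu tau Mf_nonneg by simp
    then have "(mu * real k ^ k * U) * (KA\<^sup>2 * x) + (mu * real k ^ k * U) * (Mf (i - 1) * tau * x)
        \<le> (mu * real k ^ k * (KA\<^sup>2 + Mf (i - 1) * tau)) * (U * x + 1)" by (simp add: algebra_simps)
    then show ?thesis unfolding Ci_def by (simp add: algebra_simps)
  qed
  finally show ?thesis unfolding mp_def th[symmetric] j_def U_def x_def .
qed

definition YY :: "(nat \<Rightarrow> nat) \<Rightarrow> nat \<Rightarrow> real" where
  "YY u n = (\<Sum>j\<le>k. pj k u n j * exp (theta u n j))"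
definition Csum :: real where
  "Csum = real LL * (mu * real k ^ k * Eb) + C0 + (\<Sum>i=1..r-1. Ci i)"

lemma good0_un: assumes "good0 u n" shows "u n \<le> n" "k \<le> n"
proof -
  note xf = x_facts[OF assms]
  have "real (u n) \<le> real n" using xf(2,4) unfolding xx_def by (simp add: divide_simps)
  then show "u n \<le> n" by simp
  have "8 * (real k + 1) \<le> real n" using assms unfolding good0_def by simp
  then show "k \<le> n" by simp
qed

lemma main_sum:
  assumes g: "good2 u n"
  shows "\<bar>real (mm u n) * (YY u n - 1) - mu * cc * real (k choose (r - 1)) * (1 + tau) ^ (r - 1) * real (u n)\<bar>
     \<le> Csum * (real (u n) * xx u n + 1)"
proof -
  have g1: "good1 u n" using g by (rule good2_good1)
  note gf = good1_facts[OF g1]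
  note xf = x_facts[OF gf(1)]
  define x where "x = xx u n"
  define U where "U = real (u n)"
  define m where "m = real (mm u n)"
  define f where "f = (\<lambda>j. m * pj k u n j * (exp (theta u n j) - 1))"
  define tg where "tg = (\<lambda>i. cc * (mu * tau ^ i * U * WW i))"
  have x0: "0 < x" "x \<le> 1" using xf unfolding x_def by auto
  have U1: "1 \<le> U" using gf(1) unfolding good0_def U_def by simp
  have Ux0: "0 \<le> U * x" using U1 x0 by simp
  have ps: "(\<Sum>j\<le>k. pj k u n j) = 1" using pj_sum good0_un[OF gf(1)] by blast
  have Y1: "m * (YY u n - 1) = (\<Sum>j\<le>k. f j)"
  proof -
    have "YY u n - 1 = (\<Sum>j\<le>k. pj k u n j * (exp (theta u n j) - 1))"
      unfolding YY_def using ps by (simp add: algebra_simps sum_subtractf)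
    then show ?thesis unfolding f_def by (simp add: sum_distrib_left mult_ac)
  qed
  have spl: "(\<Sum>j\<le>k. f j) = (\<Sum>j<LL. f j) + (\<Sum>i=0..r-1. f (i + LL))"
  proof -
    have "{..k} = {..<LL} \<union> {LL..k}" using LL_facts by auto
    then have "(\<Sum>j\<le>k. f j) = (\<Sum>j<LL. f j) + (\<Sum>j=LL..k. f j)" by (simp add: sum.union_disjoint ivl_disj_int)
    moreover have "(\<Sum>j=LL..k. f j) = (\<Sum>i=0..r-1. f (i + LL))"
    proof -
      have "k = (r - 1) + LL" using LL_facts by simp
      then have "(\<Sum>j=LL..k. f j) = (\<Sum>j=0 + LL..(r - 1) + LL. f j)" by simp
      also have "\<dots> = (\<Sum>i=0..r-1. f (i + LL))" by (rule sum.shift_bounds_cl_nat_ivl)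
      finally show ?thesis .
    qed
    ultimately show ?thesis by simp
  qed
  have spl2: "(\<Sum>i=0..r-1. f (i + LL)) = f LL + (\<Sum>i=1..r-1. f (LL + i))"
    by (subst sum.atLeast_Suc_atMost) (auto simp: add.commute)
  have tsum: "(\<Sum>i=0..r-1. tg i) = mu * cc * real (k choose (r - 1)) * (1 + tau) ^ (r - 1) * U"
  proof -
    have "(1 + tau) ^ (r - 1) = (\<Sum>i\<le>r-1. real ((r - 1) choose i) * tau ^ i)"
      using binomial_ring[of tau 1 "r - 1"] by (simp add: add.commute)
    then have "mu * cc * real (k choose (r - 1)) * (1 + tau) ^ (r - 1) * U = (\<Sum>i\<le>r-1. tg i)"
      unfolding tg_def WW_def by (simp add: sum_distrib_left sum_distrib_right mult_ac)
    moreover have "{..r-1} = {0..r-1}" by auto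
    ultimately show ?thesis by simp
  qed
  have tspl: "(\<Sum>i=0..r-1. tg i) = tg 0 + (\<Sum>i=1..r-1. tg i)"
    by (subst sum.atLeast_Suc_atMost) auto
  have "\<bar>(\<Sum>j\<le>k. f j) - (\<Sum>i=0..r-1. tg i)\<bar> = \<bar>(\<Sum>j<LL. f j) + (f LL - tg 0) + (\<Sum>i=1..r-1. f (LL + i) - tg i)\<bar>"
    unfolding spl spl2 tspl by (simp add: sum_subtractf)
  also have "\<dots> \<le> (\<Sum>j<LL. \<bar>f j\<bar>) + \<bar>f LL - tg 0\<bar> + (\<Sum>i=1..r-1. \<bar>f (LL + i) - tg i\<bar>)"
    by (rule order_trans[OF abs_triangle_ineq add_mono[OF order_trans[OF abs_triangle_ineq add_mono[OF sum_abs order_refl]] sum_abs]])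
  also have "\<dots> \<le> (\<Sum>j<LL. mu * real k ^ k * Eb * (U * x)) + C0 * (U * x + 1) + (\<Sum>i=1..r-1. Ci i * (U * x + 1))"
  proof (intro add_mono sum_mono)
    show "\<bar>f j\<bar> \<le> mu * real k ^ k * Eb * (U * x)" if "j \<in> {..<LL}" for j
      using lowterm[OF g, of j] that unfolding f_def m_def U_def x_def by simp
    show "\<bar>f LL - tg 0\<bar> \<le> C0 * (U * x + 1)"
      using term0[OF g] unfolding f_def tg_def m_def U_def x_def by simp
    show "\<bar>f (LL + i) - tg i\<bar> \<le> Ci i * (U * x + 1)" if "i \<in> {1..r-1}" for i
      using termi[OF g, of i] that unfolding f_def tg_def m_def U_def x_def by simp
  qed
  also have "\<dots> \<le> Csum * (U * x + 1)"
  proof -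
    have "(\<Sum>j<LL. mu * real k ^ k * Eb * (U * x)) = real LL * (mu * real k ^ k * Eb) * (U * x)" by simp
    also have "\<dots> \<le> real LL * (mu * real k ^ k * Eb) * (U * x + 1)"
      using mu Eb_def by (intro mult_left_mono) (auto simp: add_pos_pos)
    moreover have "(\<Sum>i=1..r-1. Ci i * (U * x + 1)) = (\<Sum>i=1..r-1. Ci i) * (U * x + 1)" by (simp add: sum_distrib_right)
    moreover have "Csum * (U * x + 1) = real LL * (mu * real k ^ k * Eb) * (U * x + 1) + C0 * (U * x + 1) + (\<Sum>i=1..r-1. Ci i) * (U * x + 1)"
      unfolding Csum_def by (simp add: distrib_right)
    ultimately show ?thesis by linarith
  qed
  finally show ?thesis unfolding Y1[symmetric] tsum m_def U_def x_def .
qed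

definition Bc :: real where "Bc = \<bar>mu * cc * real (k choose (r - 1)) * (1 + tau) ^ (r - 1)\<bar> + 2 * Csum"
definition good3 :: "(nat \<Rightarrow> nat) \<Rightarrow> nat \<Rightarrow> bool" where
  "good3 u n \<longleftrightarrow> good2 u n \<and> 4 * Bc * real (u n) \<le> mu * real n"
definition Cfin :: real where "Cfin = \<bar>lam\<bar> + 2 * Cb * tau\<^sup>2 + 4 * Bc\<^sup>2 / mu + Csum"

lemma Csum_nonneg: assumes "good2 u n" shows "0 \<le> Csum"
proof -
  have "\<bar>real (mm u n) * (YY u n - 1) - mu * cc * real (k choose (r - 1)) * (1 + tau) ^ (r - 1) * real (u n)\<bar>
     \<le> Csum * (real (u n) * xx u n + 1)" by (rule main_sum[OF assms])
  moreover have "0 < real (u n) * xx u n + 1"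
  proof -
    have "0 < xx u n" using x_facts[OF good1_facts(1)[OF good2_good1[OF assms]]] by simp
    then have "0 \<le> real (u n) * xx u n" by simp
    then show ?thesis by linarith
  qed
  ultimately show ?thesis by (smt (verit) mult_neg_pos abs_ge_zero)
qed

lemma mm_lower:
  assumes g: "good2 u n"
  shows "mu * real n / 2 \<le> real (mm u n)"
proof -
  have g1: "good1 u n" using g by (rule good2_good1)
  note xf = x_facts[OF good1_facts(1)[OF g1]]
  define U where "U = real (u n)"
  define nr where "nr = real n"
  have U1: "1 \<le> U" using good1_facts(1)[OF g1] unfolding good0_def U_def by simp
  have n0: "0 < nr" using xf unfolding nr_def by simp
  have Un: "U \<le> nr" using xf(2) n0 unfolding xx_def U_def nr_def by (simp add: divide_simps)
  define d' where "d' = r - 2"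
  have d': "r - 1 = Suc d'" unfolding d'_def using r2 by simp
  define Mr where "Mr = mu * nr ^ (r - 1) / U ^ (r - 2)"
  have m_lo1: "Mr - 1 \<le> real (mm u n)" unfolding mm_def Mr_def U_def nr_def by linarith
  have "mu * nr \<le> Mr"
  proof -
    have "U ^ d' \<le> nr ^ d'" using Un U1 by (intro power_mono) auto
    then have "mu * nr * U ^ d' \<le> mu * nr * nr ^ d'" using mu n0 by (intro mult_left_mono) auto
    then show ?thesis unfolding Mr_def d' d'_def[symmetric] using U1 by (simp add: divide_simps mult_ac)
  qed
  moreover have "4 \<le> mu * nr" using g unfolding good2_def nr_def by simp
  ultimately show ?thesis using m_lo1 unfolding nr_def by linarith
qed

lemma per_n:
  assumes g3: "good3 u n"
  shows "0 < measure_pmf.expectation (chain k r u n (mm u n) (TT u n)) (\<lambda>s. exp (lam * real_of_int (fst s)))"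
    "\<bar>ln (measure_pmf.expectation (chain k r u n (mm u n) (TT u n)) (\<lambda>s. exp (lam * real_of_int (fst s))))
       - phi k r mu lam tau * real (u n)\<bar> \<le> Cfin * (real (u n) * xx u n + 1)"
proof -
  have g: "good2 u n" using g3 unfolding good3_def by simp
  have g1: "good1 u n" using g by (rule good2_good1)
  note gf = good1_facts[OF g1]
  note g0 = gf(1)
  note xf = x_facts[OF g0]
  define x where "x = xx u n"
  define U where "U = real (u n)"
  define nr where "nr = real n"
  define m where "m = real (mm u n)"
  define Y where "Y = YY u n"
  define P where "P = (\<Prod>i<TT u n. KK k r u n (TT u n - Suc i) (bb u n i))"
  define E where "E = measure_pmf.expectation (chain k r u n (mm u n) (TT u n)) (\<lambda>s. exp (lam * real_of_int (fst s)))"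
  define Main where "Main = mu * cc * real (k choose (r - 1)) * (1 + tau) ^ (r - 1) * U"
  have x0: "0 < x" "x \<le> 1" using xf unfolding x_def by auto
  have U1: "1 \<le> U" using g0 unfolding good0_def U_def by simp
  have n0: "0 < nr" using xf unfolding nr_def by simp
  have xe: "x = U / nr" unfolding x_def xx_def U_def nr_def ..
  have ps: "(\<Sum>j\<le>k. pj k u n j) = 1" using pj_sum good0_un[OF g0] by blast
  have EF: "E = P * Y ^ mm u n"
    unfolding E_def P_def Y_def YY_def theta_def bb_def aa_def
    using exact_formula[OF r2 rk pj_nonneg ps, of "mm u n" "TT u n" lam] by simp
  have Pp: "0 < P" unfolding P_def KK_def by (simp add: prod_pos)
  have ms: "\<bar>m * (Y - 1) - Main\<bar> \<le> Csum * (U * x + 1)"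
    using main_sum[OF g] unfolding m_def Y_def Main_def U_def x_def by simp
  have Cs0: "0 \<le> Csum" by (rule Csum_nonneg[OF g])
  have mY: "\<bar>m * (Y - 1)\<bar> \<le> Bc * U"
  proof -
    have "\<bar>Main\<bar> = \<bar>mu * cc * real (k choose (r - 1)) * (1 + tau) ^ (r - 1)\<bar> * U"
      unfolding Main_def using U1 by (simp add: abs_mult)
    moreover have "Csum * (U * x + 1) \<le> Csum * (2 * U)"
    proof -
      have "U * x \<le> U" using x0 U1 by (simp add: mult_left_le)
      then have "U * x + 1 \<le> 2 * U" using U1 by linarith
      then show ?thesis using Cs0 by (intro mult_left_mono) auto
    qed
    ultimately show ?thesis using ms unfolding Bc_def by (simp add: algebra_simps)
  qed
  have ml: "mu * nr / 2 \<le> m" using mm_lower[OF g] unfolding m_def nr_def .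
  have mpos: "0 < m" using ml mu n0 by (smt (verit) divide_pos_pos mult_pos_pos)
  have Y1: "\<bar>Y - 1\<bar> \<le> 2 * Bc * x / mu"
  proof -
    have "\<bar>Y - 1\<bar> = \<bar>m * (Y - 1)\<bar> / m" using mpos by (simp add: abs_mult)
    also have "\<dots> \<le> Bc * U / m" using mY mpos by (simp add: divide_right_mono)
    also have "\<dots> \<le> Bc * U / (mu * nr / 2)"
    proof -
      have "0 \<le> Bc * U" using mY by (smt (verit) abs_ge_zero)
      then show ?thesis using ml mu n0 mpos by (intro divide_left_mono) auto
    qed
    also have "\<dots> = 2 * Bc * x / mu" unfolding xe using mu n0 by (simp add: field_simps)
    finally show ?thesis .
  qed
  have Y12: "\<bar>Y - 1\<bar> \<le> 1/2"
  proof -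
    have "4 * Bc * U \<le> mu * nr" using g3 unfolding good3_def U_def nr_def by simp
    then have "2 * Bc * x / mu \<le> 1/2" unfolding xe using mu n0 by (simp add: divide_simps mult_ac)
    then show ?thesis using Y1 by linarith
  qed
  have Yp: "0 < Y" using Y12 by linarith
  show "0 < measure_pmf.expectation (chain k r u n (mm u n) (TT u n)) (\<lambda>s. exp (lam * real_of_int (fst s)))"
    using EF Pp Yp unfolding E_def by simp
  have lnE: "ln E = ln P + m * ln Y"
    unfolding EF m_def using Pp Yp by (simp add: ln_mult ln_realpow)
  have lP: "\<bar>ln P + lam * tau * U\<bar> \<le> \<bar>lam\<bar> + 2 * Cb * tau\<^sup>2 * (U * x)"
  proof -
    have "2 * Cb * tau\<^sup>2 * U\<^sup>2 / nr = 2 * Cb * tau\<^sup>2 * (U * x)" unfolding xe using n0 by (simp add: power2_eq_square)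
    then show ?thesis using lnP_bound[OF g0] unfolding P_def U_def nr_def by simp
  qed
  have lY: "\<bar>m * ln Y - m * (Y - 1)\<bar> \<le> 4 * Bc\<^sup>2 / mu * (U * x)"
  proof -
    have "\<bar>ln (1 + (Y - 1)) - (Y - 1)\<bar> \<le> 2 * (Y - 1)\<^sup>2" by (rule abs_ln_one_plus_x_minus_x_bound[OF Y12])
    then have "\<bar>m * ln Y - m * (Y - 1)\<bar> \<le> m * (2 * (Y - 1)\<^sup>2)"
      using mpos by (simp add: abs_mult right_diff_distrib[symmetric])
    also have "\<dots> = 2 * \<bar>m * (Y - 1)\<bar> * \<bar>Y - 1\<bar>" using mpos by (simp add: abs_mult power2_eq_square)
    also have "\<dots> \<le> 2 * (Bc * U) * (2 * Bc * x / mu)" using mY Y1 by (intro mult_mono) auto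
    also have "\<dots> = 4 * Bc\<^sup>2 / mu * (U * x)" by (simp add: power2_eq_square)
    finally show ?thesis .
  qed
  have phiU: "phi k r mu lam tau * U = Main - lam * tau * U"
    unfolding phi_def Main_def cc_def LL_def by (simp add: algebra_simps)
  have "\<bar>ln E - phi k r mu lam tau * U\<bar> \<le> \<bar>ln P + lam * tau * U\<bar> + \<bar>m * ln Y - m * (Y - 1)\<bar> + \<bar>m * (Y - 1) - Main\<bar>"
    unfolding lnE phiU by linarith
  also have "\<dots> \<le> (\<bar>lam\<bar> + 2 * Cb * tau\<^sup>2 * (U * x)) + 4 * Bc\<^sup>2 / mu * (U * x) + Csum * (U * x + 1)"
    using lP lY ms by linarith
  also have "\<dots> \<le> Cfin * (U * x + 1)"
  proof -
    have ux: "0 \<le> U * x" using U1 x0 by simp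
    have "\<bar>lam\<bar> * 1 \<le> \<bar>lam\<bar> * (U * x + 1)" by (rule mult_left_mono) (use ux in auto)
    then have "\<bar>lam\<bar> \<le> \<bar>lam\<bar> * (U * x + 1)" by simp
    moreover have "2 * Cb * tau\<^sup>2 * (U * x) \<le> 2 * Cb * tau\<^sup>2 * (U * x + 1)"
      by (rule mult_left_mono) (use Cb_pos in auto)
    moreover have "4 * Bc\<^sup>2 / mu * (U * x) \<le> 4 * Bc\<^sup>2 / mu * (U * x + 1)"
      by (rule mult_left_mono) (use mu in auto)
    ultimately show ?thesis unfolding Cfin_def by (simp add: algebra_simps)
  qed
  finally show "\<bar>ln (measure_pmf.expectation (chain k r u n (mm u n) (TT u n)) (\<lambda>s. exp (lam * real_of_int (fst s))))
       - phi k r mu lam tau * real (u n)\<bar> \<le> Cfin * (real (u n) * xx u n + 1)"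
    unfolding E_def U_def x_def .
qed

end




lemma ev_U: assumes "filterlim u at_top sequentially" shows "eventually (\<lambda>n. c \<le> real (u n)) sequentially"
proof -
  have "filterlim (\<lambda>n. real (u n)) at_top sequentially"
    using filterlim_compose[OF filterlim_real_sequentially assms] by simp
  then show ?thesis by (simp add: filterlim_at_top)
qed

lemma ev_n: "eventually (\<lambda>n. c \<le> real n) sequentially"
  using filterlim_real_sequentially by (simp add: filterlim_at_top)

lemma ev_Un:
  assumes "(\<lambda>n. real (u n) / real n) \<longlonglongrightarrow> 0"
  shows "eventually (\<lambda>n. c * real (u n) \<le> real n) sequentially"
proof (cases "c \<le> 0")
  case True
  then show ?thesis by (intro always_eventually allI) (simp add: mult_nonpos_nonneg order_trans[of _ 0])
next
  case False
  then have c: "0 < c" by simp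
  have "eventually (\<lambda>n. real (u n) / real n < 1 / c) sequentially"
    using order_tendstoD(2)[OF assms] c by simp
  moreover have "eventually (\<lambda>n. 1 \<le> real n) sequentially" by (rule ev_n)
  ultimately show ?thesis
  proof eventually_elim
    case (elim n)
    have n0: "0 < real n" using elim by simp
    have "real (u n) = (real (u n) / real n) * real n" using n0 by simp
    also have "\<dots> < (1 / c) * real n" using elim(1) n0 by (intro mult_strict_right_mono) auto
    finally have "real (u n) < real n / c" by simp
    then have "c * real (u n) < real n" using c by (simp add: field_simps)
    then show ?case by linarith
  qed
qed

theorem mainTheorem9:
  fixes k r :: nat and u :: "nat \<Rightarrow> nat" and \<mu> \<tau> lam :: real
  assumes "2 \<le> r" and "r \<le> k"
    and "filterlim u at_top sequentially"
    and "(\<lambda>n. real (u n) / real n) \<longlonglongrightarrow> 0"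
    and "\<mu> > 0" and "\<tau> > 0"
  shows "\<exists>g. g \<in> O(\<lambda>n. max 1 (real (u n) ^ 2 / real n)) \<and>
    (\<forall>\<^sub>F n in sequentially.
       measure_pmf.expectation
         (chain k r u n (nat \<lfloor>\<mu> * real n ^ (r - 1) / real (u n) ^ (r - 2)\<rfloor>) (nat \<lfloor>\<tau> * real (u n)\<rfloor>))
         (\<lambda>s. exp (lam * real_of_int (fst s)))
       = exp (phi k r \<mu> lam \<tau> * real (u n) + g n))"
proof -
  interpret S: Sett k r lam \<mu> \<tau> using assms by unfold_locales auto
  define E where "E = (\<lambda>n. measure_pmf.expectation
         (chain k r u n (nat \<lfloor>\<mu> * real n ^ (r - 1) / real (u n) ^ (r - 2)\<rfloor>) (nat \<lfloor>\<tau> * real (u n)\<rfloor>))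
         (\<lambda>s. exp (lam * real_of_int (fst s))))"
  have Edef: "E n = measure_pmf.expectation (chain k r u n (S.mm u n) (S.TT u n)) (\<lambda>s. exp (lam * real_of_int (fst s)))" for n
    unfolding E_def S.mm_def S.TT_def ..
  define g where "g = (\<lambda>n. ln (E n) - phi k r \<mu> lam \<tau> * real (u n))"
  note U = ev_U[OF assms(3)]
  note Un = ev_Un[OF assms(4)]
  have ev: "eventually (\<lambda>n. S.good3 u n) sequentially"
    using U[of 1] Un[of "4 * (1 + \<tau>)"] ev_n[of "8 * (real k + 1)"] ev_n[of S.Cb] Un[of "S.Cb * \<tau>"]
      Un[of "S.Mbig * \<tau>"] Un[of "2 * S.KA"] Un[of "real S.LL * S.Cb * \<tau> + S.KA"] ev_n[of "16 * real k * S.KA"]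
      ev_n[of "4 * real k * S.E1"] Un[of "8 * real k"] ev_n[of "8 * (real k)\<^sup>2"] U[of "4 * (real k)\<^sup>2"]
      U[of "4 * real k * (real k + 1) / \<tau>"] ev_n[of "2 * (real k)\<^sup>2"] ev_n[of "4 / \<mu>"] Un[of "4 * S.Bc / \<mu>"]
  proof eventually_elim
    case (elim n)
    have "4 * real k * (real (u n) + real k) = (8 * real k * real (u n)) / 2 + (8 * (real k)\<^sup>2) / 2"
      by (simp add: power2_eq_square algebra_simps)
    then have a: "4 * real k * (real (u n) + real k) \<le> real n" using elim(11,12) by linarith
    have b: "4 * real k * (real k + 1) \<le> \<tau> * real (u n)" using elim(14) assms(6) by (simp add: divide_simps mult_ac)
    have c: "4 \<le> \<mu> * real n" using elim(16) assms(5) by (simp add: divide_simps mult_ac)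
    have d: "4 * S.Bc * real (u n) \<le> \<mu> * real n" using elim(17) assms(5) by (simp add: divide_simps mult_ac)
    show ?case unfolding S.good3_def S.good2_def S.good1_def S.good0_def
      using elim a b c d by (simp add: mult_ac)
  qed
  have "\<forall>\<^sub>F n in sequentially. E n = exp (phi k r \<mu> lam \<tau> * real (u n) + g n)"
    using ev
  proof eventually_elim
    case (elim n)
    have "0 < E n" using S.per_n(1)[OF elim] unfolding Edef .
    then show ?case unfolding g_def by simp
  qed
  moreover have "g \<in> O(\<lambda>n. max 1 (real (u n) ^ 2 / real n))"
  proof (rule bigoI)
    show "\<forall>\<^sub>F n in sequentially. norm (g n) \<le> (2 * \<bar>S.Cfin\<bar>) * norm (max 1 (real (u n) ^ 2 / real n))"
      using ev
    proof eventually_elim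
      case (elim n)
      have b: "\<bar>g n\<bar> \<le> S.Cfin * (real (u n) * S.xx u n + 1)" using S.per_n(2)[OF elim] unfolding g_def Edef .
      have e: "real (u n) * S.xx u n = real (u n) ^ 2 / real n" unfolding S.xx_def by (simp add: power2_eq_square)
      have p: "0 \<le> real (u n) ^ 2 / real n" by simp
      have "S.Cfin * (real (u n) * S.xx u n + 1) \<le> \<bar>S.Cfin\<bar> * (real (u n) ^ 2 / real n + 1)"
        unfolding e using p by (simp add: mult_right_mono)
      also have "\<dots> \<le> \<bar>S.Cfin\<bar> * (2 * max 1 (real (u n) ^ 2 / real n))"
        by (intro mult_left_mono) auto
      finally show ?case using b by (simp add: mult_ac)
    qed
  qed
  ultimately show ?thesis unfolding E_def by blast
qed


end
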